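(* Let $d\ge1$. Let $G_A=(V_A,E_A)$ with configuration $\mathbf{p}^A$ and $G_B=(V_B,E_B)$ with configuration $\mathbf{p}^B$ be frameworks in general position in $\mathbb{R}^d$, with $V_C=V_A\cap V_B$ a proper subset of both $V_A$ and $V_B$, $|V_C|\ge d+1$, and $\mathbf{p}^A_i=\mathbf{p}^B_i$ for $i\in V_C$. Let $\Omega_A$, $\Omega_B$ be positive semidefinite stress matrices of nullity $d+1$ of $G_A(\mathbf{p}^A)$, $G_B(\mathbf{p}^B)$, and assume moreover that $G_A(\mathbf{p}^A)$ is infinitesimally rigid. Let $F=\{\{i_k,j_k\}:k=1,\dots,K\}$ be the set of edges of $E_B\setminus E_A$ with both endpoints in $V_C$. Then there is a real symmetric $V_A\times V_A$ matrix $\Omega_{AK}$ which is a stress matrix of the framework with graph $(V_A,E_A\cup F)$ and configuration $\mathbf{p}^A$ and satisfies $(\Omega_{AK})_{i_kj_k}=-(\Omega_B)_{i_kj_k}$ for $k=1,\dots,K$ (its entries are obtained from the rigidity matrix of $G_A(\mathbf{p}^A)$ and the entries of $\Omega_B$ by solving $K$ systems of linear equations); and for a large enough constant $c>0$, the matrix $$\widetilde\Omega_{re}=c\,\widetilde\Omega_A+\widetilde\Omega_{AK}+\widetilde\Omega_B$$ is a positive semidefinite stress matrix of nullity $d+1$ of the edge-reduced framework attachment, i.e. of the framework with graph $(V_A\cup V_B,(E_A\cup E_B)\setminus F)$ and configuration $\mathbf{p}$ where $\mathbf{p}_i=\mathbf{p}^A_i$ ($i\in V_A$), $\mathbf{p}_i=\mathbf{p}^B_i$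 ($i\in V_B$). Here $\widetilde X$ denotes the extension by zeros of a matrix $X$ indexed by $V_A$ or $V_B$ to a matrix indexed by $V_A\cup V_B$.
   Context: A framework $G(\mathbf{p})$ in $\mathbb{R}^d$ is a finite graph $G=(V,E)$ with points $\mathbf{p}_i\in\mathbb{R}^d$; general position means any $d+1$ distinct vertices have affinely independent points. A stress matrix of $G(\mathbf{p})$ is a real $|V|\times|V|$ matrix $\Omega$ with: $\Omega_{ij}=\Omega_{ji}$; $\Omega_{ij}=0$ whenever $i\ne j$ and $\{i,j\}\notin E$; $\sum_j\Omega_{ij}=0$ and $\sum_j\Omega_{ij}\mathbf{p}_j=0$ for all $i$. Nullity means $\dim\ker$. The rigidity matrix $df$ of $G(\mathbf{p})$ is the $|E|\times |V|d$ matrix whose row for edge $\{i,j\}$ has $\mathbf{p}_i-\mathbf{p}_j$ in the $d$ columns of vertex $i$, $\mathbf{p}_j-\mathbf{p}_i$ in the columns of vertex $j$, and zeros elsewhere; $G(\mathbf{p})$ is infinitesimally rigid if $\operatorname{rank}(df)=|V|d-\binom{d+1}{2}$. *)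

theory Defs
  imports "HOL-Analysis.Analysis" "HOL-Library.Function_Algebras"
begin

text \<open>Frameworks: a finite vertex set V of an arbitrary vertex type 'v, an edge set E of
  two-element subsets of V, and a configuration p :: 'v => 'a in a Euclidean space 'a
  (so d = DIM('a) >= 1).  Matrices indexed by V are functions 'v => 'v => real of which
  only the entries on V x V matter.\<close>

definition graph_on :: "'v set \<Rightarrow> 'v set set \<Rightarrow> bool" where
  "graph_on V E \<longleftrightarrow> finite V \<and> (\<forall>e\<in>E. e \<subseteq> V \<and> card e = 2)"

definition general_position :: "'v set \<Rightarrow> ('v \<Rightarrow> 'a::euclidean_space) \<Rightarrow> bool" where
  "general_position V p \<longleftrightarrow>
     (\<forall>S\<subseteq>V. card S = DIM('a) + 1 \<longrightarrow> inj_on p S \<and> \<not> affine_dependent (p ` S))"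

definition stress_matrix ::
  "'v set \<Rightarrow> 'v set set \<Rightarrow> ('v \<Rightarrow> 'a::euclidean_space) \<Rightarrow> ('v \<Rightarrow> 'v \<Rightarrow> real) \<Rightarrow> bool" where
  "stress_matrix V E p \<Omega> \<longleftrightarrow>
     (\<forall>i\<in>V. \<forall>j\<in>V. \<Omega> i j = \<Omega> j i) \<and>
     (\<forall>i\<in>V. \<forall>j\<in>V. i \<noteq> j \<and> {i, j} \<notin> E \<longrightarrow> \<Omega> i j = 0) \<and>
     (\<forall>i\<in>V. (\<Sum>j\<in>V. \<Omega> i j) = 0) \<and>
     (\<forall>i\<in>V. (\<Sum>j\<in>V. \<Omega> i j *\<^sub>R p j) = 0)"

definition psd_on :: "'v set \<Rightarrow> ('v \<Rightarrow> 'v \<Rightarrow> real) \<Rightarrow> bool" where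
  "psd_on V \<Omega> \<longleftrightarrow> (\<forall>x::'v \<Rightarrow> real. (\<Sum>i\<in>V. \<Sum>j\<in>V. x i * \<Omega> i j * x j) \<ge> 0)"

definition kernel_on :: "'v set \<Rightarrow> ('v \<Rightarrow> 'v \<Rightarrow> real) \<Rightarrow> ('v \<Rightarrow> real) set" where
  "kernel_on V \<Omega> = {x. (\<forall>i. i \<notin> V \<longrightarrow> x i = 0) \<and> (\<forall>i\<in>V. (\<Sum>j\<in>V. \<Omega> i j * x j) = 0)}"

definition nullity_on :: "'v set \<Rightarrow> ('v \<Rightarrow> 'v \<Rightarrow> real) \<Rightarrow> nat" where
  "nullity_on V \<Omega> = vector_space.dim (\<lambda>c (x::'v \<Rightarrow> real) i. c * x i) (kernel_on V \<Omega>)"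

text \<open>Row of the rigidity matrix for the edge {i,j}, as an element of ('v => 'a)
  (a vector of R^(|V| d)): p_i - p_j in the block of i, p_j - p_i in the block of j.\<close>
definition rigidity_row :: "('v \<Rightarrow> 'a::euclidean_space) \<Rightarrow> 'v \<Rightarrow> 'v \<Rightarrow> ('v \<Rightarrow> 'a)" where
  "rigidity_row p i j = (\<lambda>k. if k = i then p i - p j else if k = j then p j - p i else 0)"

definition rigidity_rank :: "'v set set \<Rightarrow> ('v \<Rightarrow> 'a::euclidean_space) \<Rightarrow> nat" where
  "rigidity_rank E p = vector_space.dim (\<lambda>c (u::'v \<Rightarrow> 'a) k. c *\<^sub>R u k)
      {rigidity_row p i j | i j. {i, j} \<in> E}"

definition inf_rigid :: "'v set \<Rightarrow> 'v set set \<Rightarrow> ('v \<Rightarrow> 'a::euclidean_space) \<Rightarrow> bool" where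
  "inf_rigid V E p \<longleftrightarrow> rigidity_rank E p = card V * DIM('a) - ((DIM('a) + 1) choose 2)"

definition ext0 :: "'v set \<Rightarrow> ('v \<Rightarrow> 'v \<Rightarrow> real) \<Rightarrow> ('v \<Rightarrow> 'v \<Rightarrow> real)" where
  "ext0 V X = (\<lambda>i j. if i \<in> V \<and> j \<in> V then X i j else 0)"

end

theory Submission
  imports Defs
begin


interpretation fr: vector_space "\<lambda>c (x::'v\<Rightarrow>real) i. c * x i"
  by unfold_locales (auto simp: fun_eq_iff algebra_simps)

interpretation fa: vector_space "\<lambda>c (u::'v\<Rightarrow>'a::real_vector) k. c *\<^sub>R u k"
  by unfold_locales (auto simp: fun_eq_iff algebra_simps)

lemma sum_fun_apply: "(sum f A) x = sum (\<lambda>a. f a x) A"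
  by (induct A rule: infinite_finite_induct) auto

definition aff :: "'v set \<Rightarrow> ('v \<Rightarrow> 'a::euclidean_space) \<Rightarrow> 'a \<Rightarrow> real \<Rightarrow> 'v \<Rightarrow> real" where
  "aff V p a b = (\<lambda>i. if i \<in> V then a \<bullet> p i + b else 0)"

definition QF :: "'v set \<Rightarrow> ('v \<Rightarrow> 'v \<Rightarrow> real) \<Rightarrow> ('v \<Rightarrow> real) \<Rightarrow> real" where
  "QF V M x = (\<Sum>i\<in>V. \<Sum>j\<in>V. x i * M i j * x j)"

lemma affine_indep_zero:
  fixes p :: "'v \<Rightarrow> 'a::euclidean_space"
  assumes "inj_on p S" "card S = DIM('a) + 1" "\<not> affine_dependent (p ` S)"
    and "\<forall>i\<in>S. a \<bullet> p i + b = 0"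
  shows "a = 0 \<and> b = 0"
proof -
  have "card (p ` S) = card S" using assms(1) by (rule card_image)
  then have "aff_dim (p ` S) = DIM('a)"
    using aff_dim_affine_independent[OF assms(3)] assms(2) by simp
  then have hull: "affine hull (p ` S) = UNIV" using aff_dim_eq_full by blast
  have "p ` S \<subseteq> {x. a \<bullet> x = -b}" using assms(4) by (force simp: algebra_simps)
  then have "affine hull (p ` S) \<subseteq> {x. a \<bullet> x = -b}"
    by (rule hull_minimal) (rule affine_hyperplane)
  then have all: "\<And>x. a \<bullet> x = -b" using hull by auto
  from all[of 0] have "b = 0" by simp
  with all[of a] have "a = 0" by simp
  with \<open>b = 0\<close> show ?thesis by simp
qed

lemma gp_subset:
  fixes p :: "'v \<Rightarrow> 'a::euclidean_space"
  assumes "general_position V p" "C \<subseteq> V" "DIM('a) + 1 \<le> card C"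
  obtains S where "S \<subseteq> C" "finite S" "card S = DIM('a)+1" "inj_on p S" "\<not> affine_dependent (p ` S)"
proof -
  obtain S where S: "S \<subseteq> C" "card S = DIM('a)+1" "finite S"
    using obtain_subset_with_card_n[OF assms(3)] by blast
  with assms show ?thesis using that unfolding general_position_def by blast
qed

lemma aff_add: "aff V p a b + aff V p a' b' = aff V p (a + a') (b + b')"
  by (auto simp: aff_def fun_eq_iff algebra_simps inner_add_left)

lemma aff_scale: "(\<lambda>i. c * aff V p a b i) = aff V p (c *\<^sub>R a) (c * b)"
  by (auto simp: aff_def fun_eq_iff algebra_simps)

lemma aff_zero: "aff V p 0 0 = 0"
  by (auto simp: aff_def fun_eq_iff)

lemma subspace_aff: "fr.subspace (range (\<lambda>(a,b). aff V p a b))"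
  unfolding fr.subspace_def
proof (intro conjI ballI allI)
  show "0 \<in> range (\<lambda>(a,b). aff V p a b)" by (rule image_eqI[where x="(0,0)"]) (simp_all add: aff_zero)
next
  fix x y assume "x \<in> range (\<lambda>(a,b). aff V p a b)" "y \<in> range (\<lambda>(a,b). aff V p a b)"
  then obtain a b a' b' where "x = aff V p a b" "y = aff V p a' b'" by auto
  then show "x + y \<in> range (\<lambda>(a,b). aff V p a b)"
    by (intro image_eqI[where x="(a+a',b+b')"]) (simp_all add: aff_add)
next
  fix c x assume "x \<in> range (\<lambda>(a,b). aff V p a b)"
  then obtain a b where "x = aff V p a b" by auto
  then show "(\<lambda>i. c * x i) \<in> range (\<lambda>(a,b). aff V p a b)"
    by (intro image_eqI[where x="(c *\<^sub>R a, c * b)"]) (simp_all add: aff_scale)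
qed

lemma aff_in_kernel:
  assumes "stress_matrix V E p \<Omega>"
  shows "aff V p a b \<in> kernel_on V \<Omega>"
proof -
  have "(\<Sum>j\<in>V. \<Omega> i j * aff V p a b j) = 0" if "i \<in> V" for i
  proof -
    have "(\<Sum>j\<in>V. \<Omega> i j * aff V p a b j) = (\<Sum>j\<in>V. a \<bullet> (\<Omega> i j *\<^sub>R p j) + b * \<Omega> i j)"
      by (rule sum.cong) (auto simp: aff_def algebra_simps)
    also have "\<dots> = a \<bullet> (\<Sum>j\<in>V. \<Omega> i j *\<^sub>R p j) + b * (\<Sum>j\<in>V. \<Omega> i j)"
      by (simp add: sum.distrib inner_sum_right sum_distrib_left)
    also have "\<dots> = 0"
    proof -
      have "(\<Sum>j\<in>V. \<Omega> i j *\<^sub>R p j) = 0" "(\<Sum>j\<in>V. \<Omega> i j) = 0"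
        using assms that unfolding stress_matrix_def by blast+
      then show ?thesis by simp
    qed
    finally show ?thesis .
  qed
  then show ?thesis unfolding kernel_on_def by (auto simp: aff_def)
qed

lemma linear_aff: "Vector_Spaces.linear scaleR (\<lambda>c (x::'v\<Rightarrow>real) i. c * x i) (\<lambda>(a,b). aff V p a b)"
  unfolding Vector_Spaces.linear_def module_hom_def module_hom_axioms_def
  apply (intro conjI)
  apply (rule real_vector.vector_space_axioms)
  apply (rule fr.vector_space_axioms)
  apply (rule real_vector.module_axioms)
  apply (rule fr.module_axioms)
  apply (auto simp: aff_def fun_eq_iff algebra_simps inner_add_left)
  done

lemma dim_aff:
  fixes p :: "'v \<Rightarrow> 'a::euclidean_space"
  assumes "S \<subseteq> V" "inj_on p S" "card S = DIM('a)+1" "\<not> affine_dependent (p ` S)"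
  shows "fr.dim (range (\<lambda>(a,b). aff V p a b)) = DIM('a) + 1"
proof -
  interpret P: finite_dimensional_vector_space_pair_1 "scaleR :: real \<Rightarrow> ('a\<times>real) \<Rightarrow> _" Basis
    "\<lambda>c (x::'v\<Rightarrow>real) i. c * x i" by unfold_locales
  have inj: "inj (\<lambda>(a,b). aff V p a b)"
  proof (rule injI)
    fix x y assume eq: "(case x of (a, b) \<Rightarrow> aff V p a b) = (case y of (a, b) \<Rightarrow> aff V p a b)"
    obtain a b a' b' where xy: "x = (a,b)" "y = (a',b')" by (cases x, cases y) auto
    have "\<forall>i\<in>S. (a - a') \<bullet> p i + (b - b') = 0"
    proof
      fix i assume "i \<in> S"
      then have "aff V p a b i = aff V p a' b' i" using eq xy by simp
      then show "(a - a') \<bullet> p i + (b - b') = 0" using \<open>i\<in>S\<close> assms(1)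
        by (auto simp: aff_def algebra_simps inner_diff_left)
    qed
    from affine_indep_zero[OF assms(2-4) this] show "x = y" using xy by simp
  qed
  have "inj_on (\<lambda>(a,b). aff V p a b) (module.span scaleR (UNIV::('a\<times>real) set))"
    by (metis inj subset_UNIV inj_on_subset)
  from P.dim_image_eq[OF linear_aff[of V p] this]
  show ?thesis by (simp add: dim_raw_def[symmetric])
qed



lemma kernel_eq_aff:
  fixes p :: "'v \<Rightarrow> 'a::euclidean_space"
  assumes st: "stress_matrix V E p \<Omega>" and nul: "nullity_on V \<Omega> = DIM('a)+1"
    and S: "S \<subseteq> V" "inj_on p S" "card S = DIM('a)+1" "\<not> affine_dependent (p ` S)"
  shows "kernel_on V \<Omega> = range (\<lambda>(a,b). aff V p a b)"
proof
  let ?A = "range (\<lambda>(a,b). aff V p a b)"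
  show A: "?A \<subseteq> kernel_on V \<Omega>" using aff_in_kernel[OF st] by auto
  obtain B where B: "B \<subseteq> kernel_on V \<Omega>" "fr.independent B" "kernel_on V \<Omega> \<subseteq> fr.span B"
    "card B = fr.dim (kernel_on V \<Omega>)"
    using fr.basis_exists by blast
  have cB: "card B = DIM('a)+1" using B(4) nul unfolding nullity_on_def by simp
  then have finB: "finite B" by (intro card_ge_0_finite) simp
  obtain BA where BA: "BA \<subseteq> ?A" "fr.independent BA" "?A \<subseteq> fr.span BA" "card BA = fr.dim ?A"
    using fr.basis_exists by blast
  have cBA: "card BA = DIM('a)+1" using BA(4) dim_aff[OF S] by simp
  then have finBA: "finite BA" by (intro card_ge_0_finite) simp
  have spA: "fr.span BA \<subseteq> ?A" using BA(1) subspace_aff by (rule fr.span_minimal)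
  show "kernel_on V \<Omega> \<subseteq> ?A"
  proof
    fix x assume x: "x \<in> kernel_on V \<Omega>"
    show "x \<in> ?A"
    proof (rule ccontr)
      assume nx: "x \<notin> ?A"
      then have nsp: "x \<notin> fr.span BA" using spA by blast
      then have ind: "fr.independent (insert x BA)" using fr.independent_insertI BA(2) by blast
      have "insert x BA \<subseteq> fr.span B" using x BA(1) B(3) A by blast
      from fr.independent_span_bound[OF finB ind this] have "card (insert x BA) \<le> card B" by blast
      moreover have "x \<notin> BA" using nsp fr.span_base by blast
      then have "card (insert x BA) = card BA + 1" using finBA by simp
      ultimately show False using cB cBA by simp
    qed
  qed
qed

lemma QF_kernel:
  assumes "x \<in> kernel_on V M" shows "QF V M x = 0"
proof -
  have "QF V M x = (\<Sum>i\<in>V. x i * (\<Sum>j\<in>V. M i j * x j))"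
    unfolding QF_def by (simp add: sum_distrib_left mult.assoc)
  also have "\<dots> = 0" using assms unfolding kernel_on_def by simp
  finally show ?thesis .
qed

lemma QF_expand:
  "QF V M (\<lambda>i. y i + k i) = QF V M y + (\<Sum>i\<in>V. y i * (\<Sum>j\<in>V. M i j * k j))
     + (\<Sum>i\<in>V. k i * (\<Sum>j\<in>V. M i j * y j)) + QF V M k"
proof -
  have "QF V M (\<lambda>i. y i + k i) = (\<Sum>i\<in>V. \<Sum>j\<in>V. y i * M i j * y j + y i * M i j * k j
      + k i * M i j * y j + k i * M i j * k j)"
    unfolding QF_def by (intro sum.cong refl) (simp add: algebra_simps)
  also have "\<dots> = QF V M y + (\<Sum>i\<in>V. \<Sum>j\<in>V. y i * M i j * k j)
      + (\<Sum>i\<in>V. \<Sum>j\<in>V. k i * M i j * y j) + QF V M k"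
    unfolding QF_def by (simp only: sum.distrib)
  also have "\<dots> = QF V M y + (\<Sum>i\<in>V. y i * (\<Sum>j\<in>V. M i j * k j))
     + (\<Sum>i\<in>V. k i * (\<Sum>j\<in>V. M i j * y j)) + QF V M k"
    by (simp only: sum_distrib_left mult.assoc)
  finally show ?thesis .
qed

lemma QF_shift:
  assumes sym: "\<forall>i\<in>V. \<forall>j\<in>V. M i j = M j i" and k: "\<forall>i\<in>V. (\<Sum>j\<in>V. M i j * k j) = 0"
  shows "QF V M (\<lambda>i. y i + k i) = QF V M y"
proof -
  have "(\<Sum>i\<in>V. k i * (\<Sum>j\<in>V. M i j * y j)) = (\<Sum>j\<in>V. y j * (\<Sum>i\<in>V. M j i * k i))"
  proof -
    have "(\<Sum>i\<in>V. k i * (\<Sum>j\<in>V. M i j * y j)) = (\<Sum>i\<in>V. \<Sum>j\<in>V. k i * M i j * y j)"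
      by (simp add: sum_distrib_left mult.assoc)
    also have "\<dots> = (\<Sum>j\<in>V. \<Sum>i\<in>V. k i * M i j * y j)" by (rule sum.swap)
    also have "\<dots> = (\<Sum>j\<in>V. y j * (\<Sum>i\<in>V. M j i * k i))"
      unfolding sum_distrib_left
    proof (intro sum.cong refl)
      fix j i assume "j \<in> V" "i \<in> V"
      then have "M i j = M j i" using sym by blast
      then show "k i * M i j * y j = y j * (M j i * k i)" by simp
    qed
    finally show ?thesis .
  qed
  also have "\<dots> = 0" using k by simp
  finally have "(\<Sum>i\<in>V. k i * (\<Sum>j\<in>V. M i j * y j)) = 0" .
  moreover have "QF V M k = 0"
    unfolding QF_def using k by (simp add: sum_distrib_left[symmetric] mult.assoc)
  ultimately show ?thesis unfolding QF_expand using k by simp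
qed

lemma real_quad_zero:
  fixes g q :: real
  assumes "\<forall>t. 0 \<le> 2 * t * g + t^2 * q"
  shows "g = 0"
proof -
  define D where "D = \<bar>q\<bar> + 1"
  have D: "D > 0" unfolding D_def by simp
  define t where "t = - g / D"
  have tD: "t * D = - g" unfolding t_def using D by simp
  have "0 \<le> 2 * t * g + t^2 * q" using assms by blast
  then have "0 \<le> D^2 * (2 * t * g + t^2 * q)" using D by simp
  also have "D^2 * (2 * t * g + t^2 * q) = 2 * g * (t * D) * D + (t * D)^2 * q"
    by (simp add: power2_eq_square algebra_simps)
  also have "\<dots> = - 2 * g^2 * D + g^2 * q" unfolding tD by (simp add: power2_eq_square)
  finally have A: "0 \<le> - 2 * g^2 * D + g^2 * q" .
  have B: "g^2 * q \<le> g^2 * \<bar>q\<bar>" by (simp add: mult_left_mono)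
  have C: "0 \<le> g^2 * \<bar>q\<bar>" by simp
  have "g^2 * D = g^2 * \<bar>q\<bar> + g^2" unfolding D_def by (simp add: algebra_simps)
  then have "g^2 \<le> 0" using A B C by linarith
  then show ?thesis by simp
qed

lemma psd_QF: "psd_on V M \<Longrightarrow> 0 \<le> QF V M x"
  by (simp add: psd_on_def QF_def)

lemma psd_zero_kernel:
  assumes fin: "finite V" and psd: "psd_on V M" and sym: "\<forall>i\<in>V. \<forall>j\<in>V. M i j = M j i"
    and z: "QF V M x = 0" and i: "i \<in> V"
  shows "(\<Sum>j\<in>V. M i j * x j) = 0"
proof -
  let ?g = "\<Sum>j\<in>V. M i j * x j"
  have "0 \<le> 2 * t * ?g + t^2 * M i i" for t
  proof -
    let ?d = "\<lambda>k. if k = i then t else 0"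
    have "0 \<le> QF V M (\<lambda>k. x k + ?d k)" using psd by (rule psd_QF)
    also have "QF V M (\<lambda>k. x k + ?d k) = QF V M x + (\<Sum>k\<in>V. x k * (\<Sum>j\<in>V. M k j * ?d j))
       + (\<Sum>k\<in>V. ?d k * (\<Sum>j\<in>V. M k j * x j)) + QF V M ?d" by (rule QF_expand)
    also have "(\<Sum>k\<in>V. x k * (\<Sum>j\<in>V. M k j * ?d j)) = t * ?g"
    proof -
      have "(\<Sum>k\<in>V. x k * (\<Sum>j\<in>V. M k j * ?d j)) = (\<Sum>k\<in>V. x k * (M k i * t))"
        using fin i by (intro sum.cong) (auto simp: if_distrib cong: if_cong)
      also have "\<dots> = t * (\<Sum>k\<in>V. M i k * x k)"
        using sym i by (auto simp: sum_distrib_left algebra_simps intro!: sum.cong)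
      finally show ?thesis .
    qed
    also have "(\<Sum>k\<in>V. ?d k * (\<Sum>j\<in>V. M k j * x j)) = t * ?g"
    proof -
      have "(\<Sum>k\<in>V. ?d k * (\<Sum>j\<in>V. M k j * x j)) = (\<Sum>k\<in>V. if k = i then t * ?g else 0)"
        by (intro sum.cong) auto
      then show ?thesis using fin i by simp
    qed
    also have "QF V M ?d = t^2 * M i i"
    proof -
      have "QF V M ?d = (\<Sum>k\<in>V. ?d k * (\<Sum>j\<in>V. M k j * ?d j))"
        unfolding QF_def by (simp add: sum_distrib_left mult.assoc)
      also have "\<dots> = (\<Sum>k\<in>V. if k = i then t * (M i i * t) else 0)"
        using fin i by (intro sum.cong) (auto simp: if_distrib cong: if_cong)
      also have "\<dots> = t * (M i i * t)" using fin i by simp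
      finally show ?thesis by (simp add: power2_eq_square)
    qed
    finally show ?thesis using z by simp
  qed
  then show ?thesis using real_quad_zero by blast
qed



lemma stress_kill:
  assumes "stress_matrix V E p M" "i \<in> V"
  shows "(\<Sum>j\<in>V. M i j * (a \<bullet> p j + b)) = 0"
proof -
  have "aff V p a b \<in> kernel_on V M" by (rule aff_in_kernel[OF assms(1)])
  then have "(\<Sum>j\<in>V. M i j * aff V p a b j) = 0" using assms(2) unfolding kernel_on_def by blast
  moreover have "(\<Sum>j\<in>V. M i j * aff V p a b j) = (\<Sum>j\<in>V. M i j * (a \<bullet> p j + b))"
    by (rule sum.cong) (auto simp: aff_def)
  ultimately show ?thesis by simp
qed

lemma stress_sym: assumes "stress_matrix V E p M" shows "\<forall>i\<in>V. \<forall>j\<in>V. M i j = M j i"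
  using assms unfolding stress_matrix_def by (rule conjunct1)

lemma QF_cong: "(\<And>i. i \<in> V \<Longrightarrow> x i = y i) \<Longrightarrow> QF V M x = QF V M y"
  unfolding QF_def by (intro sum.cong refl) auto

lemma QF_scale: "QF V M (\<lambda>i. c * y i) = c^2 * QF V M y"
  unfolding QF_def sum_distrib_left
  by (intro sum.cong refl) (simp add: power2_eq_square algebra_simps)

lemma QF_affine_shift:
  assumes "stress_matrix V E p M"
  shows "QF V M x = QF V M (\<lambda>i. x i - (a \<bullet> p i + b))"
proof -
  have "QF V M (\<lambda>i. (x i - (a \<bullet> p i + b)) + (a \<bullet> p i + b)) = QF V M (\<lambda>i. x i - (a \<bullet> p i + b))"
    by (rule QF_shift[OF stress_sym[OF assms]]) (use stress_kill[OF assms] in blast)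
  then show ?thesis by simp
qed

lemma decomp:
  fixes p :: "'v \<Rightarrow> 'a::euclidean_space"
  assumes fin: "finite V" and inj0: "\<forall>a b. (\<forall>i\<in>V. a \<bullet> p i + b = 0) \<longrightarrow> a = 0 \<and> b = 0"
  shows "\<exists>a b. (\<Sum>i\<in>V. (x i - (a \<bullet> p i + b)) *\<^sub>R p i) = 0 \<and> (\<Sum>i\<in>V. x i - (a \<bullet> p i + b)) = 0"
proof -
  define L where "L = (\<lambda>z::'a\<times>real. ((\<Sum>i\<in>V. (fst z \<bullet> p i + snd z) *\<^sub>R p i), (\<Sum>i\<in>V. fst z \<bullet> p i + snd z)))"
  have lin: "linear L"
  proof (rule linearI)
    fix z w :: "'a \<times> real"
    show "L (z + w) = L z + L w"
      unfolding L_def by (simp add: inner_add_left scaleR_add_left sum.distrib algebra_simps)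
  next
    fix r and z :: "'a \<times> real"
    show "L (r *\<^sub>R z) = r *\<^sub>R L z"
      unfolding L_def by (simp add: scaleR_sum_right sum_distrib_left algebra_simps)
  qed
  have "inj L"
    unfolding linear_injective_0[OF lin]
  proof (intro allI impI)
    fix z assume z: "L z = 0"
    obtain a b where zab: "z = (a, b)" by (cases z)
    have s1: "(\<Sum>i\<in>V. (a \<bullet> p i + b) *\<^sub>R p i) = 0" and s2: "(\<Sum>i\<in>V. a \<bullet> p i + b) = 0"
      using z unfolding L_def zab by (simp_all add: prod_eq_iff)
    have "(\<Sum>i\<in>V. (a \<bullet> p i + b)^2) = a \<bullet> (\<Sum>i\<in>V. (a \<bullet> p i + b) *\<^sub>R p i) + b * (\<Sum>i\<in>V. a \<bullet> p i + b)"
      by (simp add: inner_sum_right sum_distrib_left sum.distrib[symmetric] power2_eq_square algebra_simps)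
    also have "\<dots> = 0" using s1 s2 by simp
    finally have "\<forall>i\<in>V. (a \<bullet> p i + b)^2 = 0"
      using sum_nonneg_eq_0_iff[OF fin, of "\<lambda>i. (a \<bullet> p i + b)^2"] by simp
    then have "\<forall>i\<in>V. a \<bullet> p i + b = 0" by simp
    then have "a = 0 \<and> b = 0" using inj0 by blast
    then show "z = 0" using zab by (simp add: zero_prod_def)
  qed
  then have "surj L" using linear_injective_imp_surjective[OF lin] by simp
  then obtain z where z: "L z = ((\<Sum>i\<in>V. x i *\<^sub>R p i), (\<Sum>i\<in>V. x i))" by (metis surjD)
  obtain a b where zab: "z = (a, b)" by (cases z)
  have "(\<Sum>i\<in>V. (x i - (a \<bullet> p i + b)) *\<^sub>R p i) = 0"
    using z unfolding L_def zab by (simp add: scaleR_diff_left sum_subtractf)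
  moreover have "(\<Sum>i\<in>V. x i - (a \<bullet> p i + b)) = 0"
    using z unfolding L_def zab by (simp add: sum_subtractf)
  ultimately show ?thesis by blast
qed



lemma abs_QF_le:
  assumes "\<forall>i\<in>V. \<bar>r i\<bar> \<le> 1"
  shows "\<bar>QF V M r\<bar> \<le> (\<Sum>i\<in>V. \<Sum>j\<in>V. \<bar>M i j\<bar>)"
proof -
  have "\<bar>QF V M r\<bar> \<le> (\<Sum>i\<in>V. \<bar>\<Sum>j\<in>V. r i * M i j * r j\<bar>)" unfolding QF_def by (rule sum_abs)
  also have "\<dots> \<le> (\<Sum>i\<in>V. \<Sum>j\<in>V. \<bar>r i * M i j * r j\<bar>)" by (intro sum_mono sum_abs)
  also have "\<dots> \<le> (\<Sum>i\<in>V. \<Sum>j\<in>V. \<bar>M i j\<bar>)"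
  proof (intro sum_mono)
    fix i j assume "i\<in>V" "j\<in>V"
    then have "\<bar>r i\<bar> \<le> 1" "\<bar>r j\<bar> \<le> 1" using assms by auto
    then have "\<bar>r i\<bar> * \<bar>r j\<bar> \<le> 1" by (intro mult_le_one) auto
    then have "\<bar>M i j\<bar> * (\<bar>r i\<bar> * \<bar>r j\<bar>) \<le> \<bar>M i j\<bar> * 1" by (intro mult_left_mono) auto
    moreover have "\<bar>r i * M i j * r j\<bar> = \<bar>M i j\<bar> * (\<bar>r i\<bar> * \<bar>r j\<bar>)" by (simp add: abs_mult)
    ultimately show "\<bar>r i * M i j * r j\<bar> \<le> \<bar>M i j\<bar>" by simp
  qed
  finally show ?thesis .
qed

lemma QF_zero_on: "(\<And>i. i \<in> V \<Longrightarrow> r i = 0) \<Longrightarrow> QF V M r = 0"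
  unfolding QF_def by simp

lemma psd_dominate:
  fixes p :: "'v \<Rightarrow> 'a::euclidean_space"
  assumes fin: "finite V" and psd: "psd_on V A"
    and kerA: "kernel_on V A \<subseteq> range (\<lambda>(a,b). aff V p a b)"
    and stA: "stress_matrix V EA p A" and stB: "stress_matrix V EB p B"
    and inj0: "\<forall>a b. (\<forall>i\<in>V. a \<bullet> p i + b = 0) \<longrightarrow> a = 0 \<and> b = 0"
  shows "\<exists>c\<ge>0. \<forall>x. 0 \<le> QF V B x + c * QF V A x"
proof -
  define S where "S = {r::'v\<Rightarrow>real. (\<forall>i. r i \<in> (if i \<in> V then {-1..1} else {0}))
     \<and> (\<Sum>i\<in>V. r i *\<^sub>R p i) = 0 \<and> (\<Sum>i\<in>V. r i) = 0 \<and> (\<Sum>i\<in>V. (r i)^2) = 1}"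
  have cS: "compact S"
  proof -
    have "compactin (product_topology (\<lambda>i. euclidean) UNIV) (PiE UNIV (\<lambda>i. if i \<in> V then {-1..1::real} else {0}))"
      by (subst compactin_PiE) auto
    then have c1: "compact (PiE UNIV (\<lambda>i. if i \<in> V then {-1..1::real} else {0}))"
      by (simp add: euclidean_product_topology)
    have cl: "closed {r::'v\<Rightarrow>real. (\<Sum>i\<in>V. r i *\<^sub>R p i) = 0 \<and> (\<Sum>i\<in>V. r i) = 0 \<and> (\<Sum>i\<in>V. (r i)^2) = 1}"
      by (intro closed_Collect_conj closed_Collect_eq continuous_intros continuous_on_product_coordinates)
    have "S = PiE UNIV (\<lambda>i. if i \<in> V then {-1..1::real} else {0}) \<inter>
       {r::'v\<Rightarrow>real. (\<Sum>i\<in>V. r i *\<^sub>R p i) = 0 \<and> (\<Sum>i\<in>V. r i) = 0 \<and> (\<Sum>i\<in>V. (r i)^2) = 1}"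
      unfolding S_def PiE_UNIV_domain Pi_def by blast
    then show ?thesis using compact_Int_closed[OF c1 cl] by simp
  qed
  have reduce: "0 \<le> QF V B x + c * QF V A x" if hS: "\<forall>r\<in>S. 0 \<le> QF V B r + c * QF V A r" for x c
  proof -
    obtain a b where ab: "(\<Sum>i\<in>V. (x i - (a \<bullet> p i + b)) *\<^sub>R p i) = 0" "(\<Sum>i\<in>V. x i - (a \<bullet> p i + b)) = 0"
      using decomp[OF fin inj0] by blast
    define r where "r = (\<lambda>i. if i \<in> V then x i - (a \<bullet> p i + b) else 0)"
    have Qr: "QF V M x = QF V M r" if "stress_matrix V E p M" for M E
      unfolding QF_affine_shift[OF that, of x a b] r_def by (rule QF_cong) simp
    have r1: "(\<Sum>i\<in>V. r i *\<^sub>R p i) = 0" using ab(1) unfolding r_def by (simp cong: sum.cong)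
    have r2: "(\<Sum>i\<in>V. r i) = 0" using ab(2) unfolding r_def by (simp cong: sum.cong)
    have r0: "r i = 0" if "i \<notin> V" for i using that unfolding r_def by simp
    define n2 where "n2 = (\<Sum>i\<in>V. (r i)^2)"
    show ?thesis
    proof (cases "n2 = 0")
      case True
      then have "\<forall>i\<in>V. (r i)^2 = 0" unfolding n2_def
        using sum_nonneg_eq_0_iff[OF fin, of "\<lambda>i. (r i)^2"] by simp
      then have "QF V M r = 0" for M by (intro QF_zero_on) simp
      then show ?thesis using Qr[OF stA] Qr[OF stB] by simp
    next
      case False
      have n2pos: "n2 > 0" using False unfolding n2_def by (metis sum_nonneg zero_le_power2 order_le_less)
      define n where "n = sqrt n2"
      have npos: "n > 0" unfolding n_def using n2pos by simp
      have nsq: "n^2 = n2" unfolding n_def using n2pos by simp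
      define r' where "r' = (\<lambda>i. r i / n)"
      have rr': "r = (\<lambda>i. n * r' i)" unfolding r'_def using npos by auto
      have sq1: "(\<Sum>i\<in>V. (r' i)^2) = 1"
      proof -
        have "(\<Sum>i\<in>V. (r' i)^2) = (\<Sum>i\<in>V. (r i)^2) / n^2"
          unfolding r'_def by (simp add: power_divide sum_divide_distrib)
        then show ?thesis using nsq n2pos unfolding n2_def by simp
      qed
      have "r' \<in> S"
      proof -
        have "\<bar>r' i\<bar> \<le> 1" if "i \<in> V" for i
        proof -
          have "(r' i)^2 \<le> (\<Sum>i\<in>V. (r' i)^2)"
            using that fin by (intro member_le_sum) auto
          then have "(r' i)^2 \<le> 1" using sq1 by simp
          then show ?thesis by (rule abs_square_le_1[THEN iffD1])
        qed
        moreover have "(\<Sum>i\<in>V. r' i *\<^sub>R p i) = 0"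
        proof -
          have "(\<Sum>i\<in>V. r' i *\<^sub>R p i) = (\<Sum>i\<in>V. (1/n) *\<^sub>R (r i *\<^sub>R p i))"
            unfolding r'_def by (intro sum.cong refl) simp
          also have "\<dots> = (1/n) *\<^sub>R (\<Sum>i\<in>V. r i *\<^sub>R p i)" by (rule scaleR_sum_right[symmetric])
          finally show ?thesis using r1 by simp
        qed
        moreover have "(\<Sum>i\<in>V. r' i) = 0"
          using r2 unfolding r'_def by (simp add: sum_divide_distrib[symmetric])
        moreover have "r' i = 0" if "i \<notin> V" for i using r0[OF that] unfolding r'_def by simp
        ultimately have "\<forall>i. r' i \<in> (if i \<in> V then {-1..1} else {0})"
          by (auto simp: abs_le_iff)
        then show ?thesis unfolding S_def using sq1 \<open>(\<Sum>i\<in>V. r' i *\<^sub>R p i) = 0\<close>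
          \<open>(\<Sum>i\<in>V. r' i) = 0\<close> by blast
      qed
      then have "0 \<le> QF V B r' + c * QF V A r'" using hS by blast
      then have "0 \<le> n^2 * (QF V B r' + c * QF V A r')" by simp
      also have "\<dots> = QF V B r + c * QF V A r" unfolding rr' QF_scale by (simp add: algebra_simps)
      finally show ?thesis using Qr[OF stA] Qr[OF stB] by simp
    qed
  qed
  show ?thesis
  proof (cases "S = {}")
    case True
    then show ?thesis using reduce[of 0] by auto
  next
    case False
    have cont: "continuous_on S (QF V A)"
      unfolding QF_def
      by (intro continuous_intros continuous_on_subset[OF continuous_on_product_coordinates] subset_UNIV)
    obtain r0 where r0: "r0 \<in> S" "\<forall>y\<in>S. QF V A r0 \<le> QF V A y"
      using continuous_attains_inf[OF cS False cont] by blast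
    define m where "m = QF V A r0"
    have "m > 0"
    proof (rule ccontr)
      assume "\<not> m > 0"
      moreover have "m \<ge> 0" unfolding m_def by (rule psd_QF[OF psd])
      ultimately have m0: "QF V A r0 = 0" unfolding m_def by simp
      have "\<forall>i\<in>V. (\<Sum>j\<in>V. A i j * r0 j) = 0"
        using psd_zero_kernel[OF fin psd stress_sym[OF stA] m0] by blast
      moreover have "\<forall>i. i \<notin> V \<longrightarrow> r0 i = 0"
      proof (intro allI impI)
        fix i assume "i \<notin> V"
        have "\<forall>i. r0 i \<in> (if i \<in> V then {-1..1} else {0})" using r0(1) unfolding S_def by blast
        from this[rule_format, of i] show "r0 i = 0" using \<open>i \<notin> V\<close> by simp
      qed
      ultimately have "r0 \<in> kernel_on V A" unfolding kernel_on_def by blast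
      then obtain a b where "r0 = aff V p a b" using kerA by auto
      then have ab: "\<forall>i\<in>V. r0 i = a \<bullet> p i + b" unfolding aff_def by simp
      have s1: "(\<Sum>i\<in>V. r0 i *\<^sub>R p i) = 0" "(\<Sum>i\<in>V. r0 i) = 0" "(\<Sum>i\<in>V. (r0 i)^2) = 1"
        using r0(1) unfolding S_def by auto
      have "(\<Sum>i\<in>V. (r0 i)^2) = (\<Sum>i\<in>V. r0 i * (a \<bullet> p i + b))"
        using ab by (simp add: power2_eq_square)
      also have "\<dots> = a \<bullet> (\<Sum>i\<in>V. r0 i *\<^sub>R p i) + b * (\<Sum>i\<in>V. r0 i)"
        by (simp add: inner_sum_right sum_distrib_left sum.distrib algebra_simps)
      also have "\<dots> = 0" using s1 by simp
      finally show False using s1 by simp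
    qed
    define Mb where "Mb = (\<Sum>i\<in>V. \<Sum>j\<in>V. \<bar>B i j\<bar>)"
    have Mb0: "Mb \<ge> 0" unfolding Mb_def by (intro sum_nonneg) auto
    define c where "c = Mb / m"
    have c0: "c \<ge> 0" unfolding c_def using Mb0 \<open>m > 0\<close> by simp
    have "\<forall>r\<in>S. 0 \<le> QF V B r + c * QF V A r"
    proof
      fix r assume r: "r \<in> S"
      have "\<forall>i\<in>V. \<bar>r i\<bar> \<le> 1"
      proof
        fix i assume "i \<in> V"
        have "\<forall>i. r i \<in> (if i \<in> V then {-1..1} else {0})" using r unfolding S_def by blast
        from this[rule_format, of i] show "\<bar>r i\<bar> \<le> 1" using \<open>i \<in> V\<close> by (simp add: abs_le_iff)
      qed
      then have "\<bar>QF V B r\<bar> \<le> Mb" unfolding Mb_def by (rule abs_QF_le)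
      moreover have "m \<le> QF V A r" using r0(2) r unfolding m_def by blast
      then have "c * m \<le> c * QF V A r" using c0 by (rule mult_left_mono)
      moreover have "c * m = Mb" unfolding c_def using \<open>m > 0\<close> by simp
      ultimately show "0 \<le> QF V B r + c * QF V A r" by linarith
    qed
    then show ?thesis using reduce c0 by blast
  qed
qed



lemma card_pairs: "card {(m::nat,n). m < n \<and> n < N} = N choose 2"
proof (induction N)
  case 0 then show ?case by simp
next
  case (Suc N)
  have eq: "{(m::nat,n). m < n \<and> n < Suc N} = {(m,n). m < n \<and> n < N} \<union> (\<lambda>m. (m,N)) ` {..<N}"
    by auto
  have fin: "finite {(m::nat,n). m < n \<and> n < N}"
    by (rule finite_subset[of _ "{..<N} \<times> {..<N}"]) auto
  have dis: "{(m::nat,n). m < n \<and> n < N} \<inter> (\<lambda>m. (m,N)) ` {..<N} = {}" by auto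
  have c2: "card ((\<lambda>m. (m,N)) ` {..<N}) = N" by (subst card_image) (auto simp: inj_on_def)
  have "card {(m::nat,n). m < n \<and> n < Suc N} = (N choose 2) + N"
    unfolding eq by (subst card_Un_disjoint[OF fin _ dis]) (use Suc c2 in auto)
  also have "\<dots> = Suc N choose 2" by (simp add: numeral_2_eq_2)
  finally show ?case .
qed

definition ipV :: "'v set \<Rightarrow> ('v \<Rightarrow> 'a::real_inner) \<Rightarrow> ('v \<Rightarrow> 'a) \<Rightarrow> real" where
  "ipV V u v = (\<Sum>k\<in>V. u k \<bullet> v k)"

lemma indexed_indep:
  fixes g :: "'i \<Rightarrow> 'v \<Rightarrow> 'a::real_vector"
  assumes fin: "finite I"
    and h: "\<And>\<alpha>. (\<Sum>l\<in>I. (\<lambda>k. \<alpha> l *\<^sub>R g l k)) = 0 \<Longrightarrow> \<forall>l\<in>I. \<alpha> l = 0"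
  shows "inj_on g I" "fa.independent (g ` I)"
proof -
  show inj: "inj_on g I"
  proof (rule inj_onI, rule ccontr)
    fix i j assume ij: "i \<in> I" "j \<in> I" "g i = g j" "i \<noteq> j"
    define \<alpha> where "\<alpha> = (\<lambda>l. (if l = i then 1 else 0) - (if l = j then 1 else (0::real)))"
    have "(\<Sum>l\<in>I. (\<lambda>k. \<alpha> l *\<^sub>R g l k)) = 0"
    proof
      fix k
      have "(\<Sum>l\<in>I. (\<lambda>k. \<alpha> l *\<^sub>R g l k)) k = (\<Sum>l\<in>I. \<alpha> l *\<^sub>R g l k)" by (rule sum_fun_apply)
      also have "\<dots> = (\<Sum>l\<in>I. (if l = i then g l k else 0) - (if l = j then g l k else 0))"
        by (intro sum.cong refl) (auto simp: \<alpha>_def)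
      also have "\<dots> = (\<Sum>l\<in>I. (if l = i then g l k else 0)) - (\<Sum>l\<in>I. (if l = j then g l k else 0))"
        by (rule sum_subtractf)
      also have "\<dots> = 0" using ij fin by simp
      finally show "(\<Sum>l\<in>I. (\<lambda>k. \<alpha> l *\<^sub>R g l k)) k = 0 k" by simp
    qed
    then have "\<alpha> i = 0" using h ij(1) by blast
    then show False unfolding \<alpha>_def using ij(4) by simp
  qed
  show "fa.independent (g ` I)"
  proof (rule fa.independent_if_scalars_zero)
    show "finite (g ` I)" using fin by simp
  next
    fix f x assume s: "(\<Sum>x\<in>g ` I. (\<lambda>k. f x *\<^sub>R x k)) = 0" and x: "x \<in> g ` I"
    have "(\<Sum>l\<in>I. (\<lambda>k. (f \<circ> g) l *\<^sub>R g l k)) = 0"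
      using s unfolding sum.reindex[OF inj] by (simp add: comp_def)
    then have "\<forall>l\<in>I. (f \<circ> g) l = 0" by (rule h)
    then show "f x = 0" using x by auto
  qed
qed

lemma fa_indep_union:
  fixes X Y :: "('v \<Rightarrow> 'a::real_vector) set"
  assumes iX: "fa.independent X" and iY: "fa.independent Y" and fX: "finite X" and fY: "finite Y"
    and disj: "\<And>w. w \<in> fa.span X \<Longrightarrow> w \<in> fa.span Y \<Longrightarrow> w = 0"
  shows "fa.independent (X \<union> Y)" "X \<inter> Y = {}"
proof -
  show XY: "X \<inter> Y = {}"
  proof (rule ccontr)
    assume "X \<inter> Y \<noteq> {}"
    then obtain x where "x \<in> X" "x \<in> Y" by blast
    then have "x = 0" using disj fa.span_base by blast
    then have "fa.dependent X" using \<open>x \<in> X\<close> fa.dependent_zero by blast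
    then show False using iX by blast
  qed
  show "fa.independent (X \<union> Y)"
  proof (rule fa.independent_if_scalars_zero)
    show "finite (X \<union> Y)" using fX fY by simp
  next
    fix f x assume s: "(\<Sum>x\<in>X \<union> Y. (\<lambda>k. f x *\<^sub>R x k)) = 0" and x: "x \<in> X \<union> Y"
    define sX where "sX = (\<Sum>x\<in>X. (\<lambda>k. f x *\<^sub>R x k))"
    define sY where "sY = (\<Sum>x\<in>Y. (\<lambda>k. f x *\<^sub>R x k))"
    have "sX + sY = 0" using s unfolding sX_def sY_def sum.union_disjoint[OF fX fY XY] .
    then have eq: "sX = - sY" by (simp add: eq_neg_iff_add_eq_0)
    have "sX \<in> fa.span X" unfolding sX_def
      by (intro fa.span_sum fa.span_scale fa.span_base)
    moreover have "sY \<in> fa.span Y" unfolding sY_def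
      by (intro fa.span_sum fa.span_scale fa.span_base)
    then have "sX \<in> fa.span Y" unfolding eq by (rule fa.span_neg)
    ultimately have "sX = 0" using disj by blast
    then have "sY = 0" using eq by simp
    have "\<forall>v\<in>X. f v = 0"
      using iX fa.dependent_finite[OF fX] \<open>sX = 0\<close> unfolding sX_def by blast
    moreover have "\<forall>v\<in>Y. f v = 0"
      using iY fa.dependent_finite[OF fY] \<open>sY = 0\<close> unfolding sY_def by blast
    ultimately show "f x = 0" using x by blast
  qed
qed

lemma supported_in_span:
  fixes u :: "'v \<Rightarrow> 'a::euclidean_space"
  assumes fin: "finite V" and su: "\<forall>k. k \<notin> V \<longrightarrow> u k = 0"
  shows "u \<in> fa.span ((\<lambda>(k,w). (\<lambda>k'. if k' = k then w else 0)) ` (V \<times> Basis))"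
proof -
  let ?T = "(\<lambda>(k,w). (\<lambda>k'. if k' = k then w else (0::'a))) ` (V \<times> Basis)"
  have eq: "u = (\<Sum>kw\<in>V \<times> Basis. (\<lambda>k'. (u (fst kw) \<bullet> snd kw) *\<^sub>R (if k' = fst kw then snd kw else 0)))"
  proof
    fix k'
    have "(\<Sum>kw\<in>V \<times> Basis. (\<lambda>k'. (u (fst kw) \<bullet> snd kw) *\<^sub>R (if k' = fst kw then snd kw else 0))) k'
        = (\<Sum>kw\<in>V \<times> Basis. (u (fst kw) \<bullet> snd kw) *\<^sub>R (if k' = fst kw then snd kw else 0))"
      by (rule sum_fun_apply)
    also have "\<dots> = (\<Sum>k\<in>V. \<Sum>w\<in>Basis. (u k \<bullet> w) *\<^sub>R (if k' = k then w else 0))"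
      by (subst sum.cartesian_product) (simp add: case_prod_beta)
    also have "\<dots> = (\<Sum>k\<in>V. if k' = k then (\<Sum>w\<in>Basis. (u k \<bullet> w) *\<^sub>R w) else 0)"
      by (intro sum.cong refl) auto
    also have "\<dots> = (if k' \<in> V then u k' else 0)"
      using fin by (simp add: euclidean_representation)
    also have "\<dots> = u k'" using su by auto
    finally show "u k' = (\<Sum>kw\<in>V \<times> Basis. (\<lambda>k'. (u (fst kw) \<bullet> snd kw) *\<^sub>R (if k' = fst kw then snd kw else 0))) k'"
      by simp
  qed
  have "(\<Sum>kw\<in>V \<times> Basis. (\<lambda>k'. (u (fst kw) \<bullet> snd kw) *\<^sub>R (if k' = fst kw then snd kw else 0))) \<in> fa.span ?T"
  proof (intro fa.span_sum)
    fix kw :: "'v \<times> 'a" assume "kw \<in> V \<times> Basis"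
    then have "(\<lambda>k'. if k' = fst kw then snd kw else (0::'a)) \<in> ?T" by (auto simp: case_prod_beta)
    then have "(\<lambda>k'. if k' = fst kw then snd kw else (0::'a)) \<in> fa.span ?T" by (rule fa.span_base)
    then show "(\<lambda>k'. (u (fst kw) \<bullet> snd kw) *\<^sub>R (if k' = fst kw then snd kw else 0)) \<in> fa.span ?T"
      by (rule fa.span_scale)
  qed
  then show ?thesis using eq by simp
qed



definition Gm :: "(nat \<Rightarrow> 'a::euclidean_space) \<Rightarrow> nat \<Rightarrow> nat \<times> nat \<Rightarrow> 'a \<Rightarrow> 'a" where
  "Gm e d l x = (if snd l < d then (e (snd l) \<bullet> x) *\<^sub>R e (fst l) - (e (fst l) \<bullet> x) *\<^sub>R e (snd l) else e (fst l))"

definition gmot :: "'v set \<Rightarrow> ('v \<Rightarrow> 'a::euclidean_space) \<Rightarrow> (nat \<Rightarrow> 'a) \<Rightarrow> nat \<Rightarrow> nat \<times> nat \<Rightarrow> 'v \<Rightarrow> 'a" where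
  "gmot V p e d l = (\<lambda>k. if k \<in> V then Gm e d l (p k) else 0)"

definition Cw :: "(nat \<Rightarrow> 'a::euclidean_space) \<Rightarrow> nat \<Rightarrow> 'a \<Rightarrow> nat \<times> nat \<Rightarrow> 'a" where
  "Cw e d w l = (if snd l < d then (w \<bullet> e (fst l)) *\<^sub>R e (snd l) - (w \<bullet> e (snd l)) *\<^sub>R e (fst l) else 0)"

definition Dw :: "(nat \<Rightarrow> 'a::euclidean_space) \<Rightarrow> nat \<Rightarrow> 'a \<Rightarrow> nat \<times> nat \<Rightarrow> real" where
  "Dw e d w l = (if snd l < d then 0 else w \<bullet> e (fst l))"

lemma Gm_inner: "w \<bullet> Gm e d l x = Cw e d w l \<bullet> x + Dw e d w l"
  unfolding Gm_def Cw_def Dw_def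
  by (auto simp: inner_diff_right inner_diff_left inner_commute)

lemma Gm_self: "z \<bullet> Gm e d l z = 0 \<or> snd l \<ge> d"
  unfolding Gm_def by (auto simp: inner_diff_right inner_commute)

lemma Gm_diff_orth: "(x - y) \<bullet> (Gm e d l x - Gm e d l y) = 0"
proof (cases "snd l < d")
  case True
  have "Gm e d l x - Gm e d l y = Gm e d l (x - y)"
    using True unfolding Gm_def by (simp add: inner_diff_right algebra_simps)
  moreover have "(x - y) \<bullet> Gm e d l (x - y) = 0" using Gm_self[of "x - y" e d l] True by auto
  ultimately show ?thesis by simp
next
  case False then show ?thesis unfolding Gm_def by simp
qed

lemma row_gmot_orth:
  assumes fin: "finite V" and ij: "i \<in> V" "j \<in> V"
  shows "ipV V (rigidity_row p i j) (gmot V p e d l) = 0"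
proof (cases "i = j")
  case True
  have "rigidity_row p i j = (\<lambda>k. 0)" unfolding True rigidity_row_def by (rule ext) simp
  then show ?thesis unfolding ipV_def by simp
next
  case False
  have "ipV V (rigidity_row p i j) (gmot V p e d l)
      = (\<Sum>k\<in>V. (if k = i then (p i - p j) \<bullet> gmot V p e d l k else 0)
              + (if k = j then (p j - p i) \<bullet> gmot V p e d l k else 0))"
    unfolding ipV_def rigidity_row_def by (intro sum.cong refl) (use False in auto)
  also have "\<dots> = (p i - p j) \<bullet> gmot V p e d l i + (p j - p i) \<bullet> gmot V p e d l j"
    using fin ij by (simp add: sum.distrib)
  also have "\<dots> = (p i - p j) \<bullet> (Gm e d l (p i) - Gm e d l (p j))"
    using ij unfolding gmot_def by (simp add: inner_diff_right inner_diff_left algebra_simps)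
  also have "\<dots> = 0" by (rule Gm_diff_orth)
  finally show ?thesis .
qed

lemma gmot_indep_coeff:
  fixes p :: "'v \<Rightarrow> 'a::euclidean_space"
  assumes e: "bij_betw e {..<DIM('a)} (Basis::'a set)"
    and S: "S \<subseteq> V" "inj_on p S" "card S = DIM('a)+1" "\<not> affine_dependent (p ` S)"
    and fI: "I = {(m,n). m < n \<and> n \<le> DIM('a)}"
    and z: "(\<Sum>l\<in>I. (\<lambda>k. \<alpha> l *\<^sub>R gmot V p e DIM('a) l k)) = 0"
  shows "\<forall>l\<in>I. \<alpha> l = 0"
proof -
  let ?d = "DIM('a)"
  have finI: "finite I" unfolding fI
    by (rule finite_subset[of _ "{..?d} \<times> {..?d}"]) auto
  have eo: "e m \<bullet> e m' = (if m = m' then 1 else 0)" if "m < ?d" "m' < ?d" for m m'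
  proof -
    have "e m \<in> Basis" "e m' \<in> Basis" using e that by (auto dest: bij_betw_apply)
    moreover have "e m = e m' \<longleftrightarrow> m = m'"
      using e that unfolding bij_betw_def inj_on_def by auto
    ultimately show ?thesis using inner_Basis[of "e m" "e m'"] by auto
  qed
  have zS: "(\<Sum>l\<in>I. \<alpha> l *\<^sub>R Gm e ?d l (p k)) = 0" if "k \<in> S" for k
  proof -
    have "k \<in> V" using that S(1) by blast
    have "(\<Sum>l\<in>I. (\<lambda>k. \<alpha> l *\<^sub>R gmot V p e ?d l k)) k = 0" using z by simp
    then show ?thesis unfolding sum_fun_apply gmot_def using \<open>k \<in> V\<close> by simp
  qed
  have key: "(\<Sum>l\<in>I. \<alpha> l *\<^sub>R Cw e ?d w l) = 0 \<and> (\<Sum>l\<in>I. \<alpha> l * Dw e ?d w l) = 0" for w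
  proof -
    have "\<forall>k\<in>S. (\<Sum>l\<in>I. \<alpha> l *\<^sub>R Cw e ?d w l) \<bullet> p k + (\<Sum>l\<in>I. \<alpha> l * Dw e ?d w l) = 0"
    proof
      fix k assume k: "k \<in> S"
      have "0 = w \<bullet> (\<Sum>l\<in>I. \<alpha> l *\<^sub>R Gm e ?d l (p k))" using zS[OF k] by simp
      also have "\<dots> = (\<Sum>l\<in>I. \<alpha> l * (Cw e ?d w l \<bullet> p k + Dw e ?d w l))"
        by (simp add: inner_sum_right Gm_inner)
      also have "\<dots> = (\<Sum>l\<in>I. \<alpha> l *\<^sub>R Cw e ?d w l) \<bullet> p k + (\<Sum>l\<in>I. \<alpha> l * Dw e ?d w l)"
        by (simp add: inner_sum_left distrib_left sum.distrib)
      finally show "(\<Sum>l\<in>I. \<alpha> l *\<^sub>R Cw e ?d w l) \<bullet> p k + (\<Sum>l\<in>I. \<alpha> l * Dw e ?d w l) = 0" by simp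
    qed
    from affine_indep_zero[OF S(2-4) this] show ?thesis .
  qed
  show ?thesis
  proof
    fix l assume l: "l \<in> I"
    obtain m n where lmn: "l = (m,n)" "m < n" "n \<le> ?d" using l fI by auto
    show "\<alpha> l = 0"
    proof (cases "n < ?d")
      case True
      have "(\<Sum>l'\<in>I. \<alpha> l' *\<^sub>R Cw e ?d (e m) l') \<bullet> e n = 0" using key by simp
      moreover have "(\<Sum>l'\<in>I. \<alpha> l' *\<^sub>R Cw e ?d (e m) l') \<bullet> e n = (\<Sum>l'\<in>I. if l' = l then \<alpha> l' else 0)"
        unfolding inner_sum_left
      proof (intro sum.cong refl)
        fix l' assume l': "l' \<in> I"
        obtain m' n' where l'mn: "l' = (m',n')" "m' < n'" "n' \<le> ?d" using l' fI by auto
        show "(\<alpha> l' *\<^sub>R Cw e ?d (e m) l') \<bullet> e n = (if l' = l then \<alpha> l' else 0)"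
        proof (cases "n' < ?d")
          case True
          then have "(\<alpha> l' *\<^sub>R Cw e ?d (e m) l') \<bullet> e n
              = \<alpha> l' * ((e m \<bullet> e m') * (e n' \<bullet> e n) - (e m \<bullet> e n') * (e m' \<bullet> e n))"
            unfolding Cw_def l'mn by (simp add: inner_diff_left algebra_simps)
          also have "\<dots> = (if l' = l then \<alpha> l' else 0)"
            using True \<open>n < ?d\<close> lmn l'mn eo by auto
          finally show ?thesis .
        next
          case False
          then show ?thesis unfolding Cw_def l'mn using lmn \<open>n < ?d\<close> by auto
        qed
      qed
      ultimately show ?thesis using finI l by simp
    next
      case False
      then have nd: "n = ?d" using lmn by simp
      have "(\<Sum>l'\<in>I. \<alpha> l' * Dw e ?d (e m) l') = 0" using key by simp
      moreover have "(\<Sum>l'\<in>I. \<alpha> l' * Dw e ?d (e m) l') = (\<Sum>l'\<in>I. if l' = l then \<alpha> l' else 0)"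
      proof (intro sum.cong refl)
        fix l' assume l': "l' \<in> I"
        obtain m' n' where l'mn: "l' = (m',n')" "m' < n'" "n' \<le> ?d" using l' fI by auto
        show "\<alpha> l' * Dw e ?d (e m) l' = (if l' = l then \<alpha> l' else 0)"
          unfolding Dw_def l'mn using lmn l'mn nd eo[of m m'] by auto
      qed
      ultimately show ?thesis using finI l by simp
    qed
  qed
qed



lemma ipV_add_left: "ipV V (u + v) w = ipV V u w + ipV V v w"
  unfolding ipV_def by (simp add: inner_add_left sum.distrib)
lemma ipV_add_right: "ipV V w (u + v) = ipV V w u + ipV V w v"
  unfolding ipV_def by (simp add: inner_add_right sum.distrib)
lemma ipV_scale_left: "ipV V (\<lambda>k. c *\<^sub>R u k) w = c * ipV V u w"
  unfolding ipV_def by (simp add: sum_distrib_left)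
lemma ipV_scale_right: "ipV V w (\<lambda>k. c *\<^sub>R u k) = c * ipV V w u"
  unfolding ipV_def by (simp add: sum_distrib_left)
lemma ipV_zero_left: "ipV V 0 w = 0" unfolding ipV_def by simp
lemma ipV_zero_right: "ipV V w 0 = 0" unfolding ipV_def by simp

lemma row_in_span:
  fixes p :: "'v \<Rightarrow> 'a::euclidean_space"
  assumes gr: "graph_on V E" and S: "S \<subseteq> V" "inj_on p S" "card S = DIM('a)+1" "\<not> affine_dependent (p ` S)"
    and rig: "inf_rigid V E p" and ij: "i0 \<in> V" "j0 \<in> V"
  shows "rigidity_row p i0 j0 \<in> fa.span {rigidity_row p i j | i j. {i, j} \<in> E}"
proof (rule ccontr)
  let ?d = "DIM('a)"
  let ?R = "{rigidity_row p i j | i j. {i, j} \<in> E}"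
  let ?row0 = "rigidity_row p i0 j0"
  assume nin: "?row0 \<notin> fa.span ?R"
  have fin: "finite V" using gr unfolding graph_on_def by blast
  have Esub: "i \<in> V \<and> j \<in> V" if "{i,j} \<in> E" for i j using gr that unfolding graph_on_def by blast
  have finR: "finite ?R"
  proof (rule finite_subset[of _ "(\<lambda>(i,j). rigidity_row p i j) ` (V \<times> V)"])
    show "?R \<subseteq> (\<lambda>(i,j). rigidity_row p i j) ` (V \<times> V)"
    proof
      fix x assume "x \<in> ?R"
      then obtain i j where "x = rigidity_row p i j" "{i,j} \<in> E" by blast
      then show "x \<in> (\<lambda>(i,j). rigidity_row p i j) ` (V \<times> V)" using Esub by force
    qed
  qed (use fin in simp)
  obtain Bw where Bw: "Bw \<subseteq> ?R" "fa.independent Bw" "?R \<subseteq> fa.span Bw" "card Bw = fa.dim ?R"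
    using fa.basis_exists by blast
  have finBw: "finite Bw" using finR Bw(1) finite_subset by blast
  have cBw: "card Bw = card V * ?d - (?d + 1 choose 2)"
    using Bw(4) rig unfolding inf_rigid_def rigidity_rank_def by simp
  have "fa.span Bw \<subseteq> fa.span ?R" using Bw(1) fa.span_mono by blast
  then have nin': "?row0 \<notin> fa.span Bw" using nin by blast
  define X where "X = insert ?row0 Bw"
  have iX: "fa.independent X" unfolding X_def by (rule fa.independent_insertI[OF nin' Bw(2)])
  have finX: "finite X" unfolding X_def using finBw by simp
  have "?row0 \<notin> Bw" using nin' fa.span_base by blast
  then have cX: "card X = card Bw + 1" unfolding X_def using finBw by simp
  obtain e where e: "bij_betw e {..<?d} (Basis::'a set)"
    using ex_bij_betw_nat_finite[of "Basis::'a set"] by (auto simp: atLeast0LessThan)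
  define I where "I = {(m::nat,n). m < n \<and> n \<le> ?d}"
  have finI: "finite I" unfolding I_def
    by (rule finite_subset[of _ "{..?d} \<times> {..?d}"]) auto
  have "I = {(m::nat,n). m < n \<and> n < Suc ?d}" unfolding I_def by auto
  then have cI: "card I = (?d + 1) choose 2" using card_pairs[of "Suc ?d"] by simp
  define g where "g = gmot V p e ?d"
  have hind: "\<forall>l\<in>I. \<alpha> l = 0" if "(\<Sum>l\<in>I. (\<lambda>k. \<alpha> l *\<^sub>R g l k)) = 0" for \<alpha>
    using gmot_indep_coeff[OF e S I_def] that unfolding g_def by blast
  have injg: "inj_on g I" and iY: "fa.independent (g ` I)"
    using indexed_indep[OF finI hind] by blast+
  define Y where "Y = g ` I"
  have finY: "finite Y" unfolding Y_def using finI by simp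
  have cY: "card Y = card I" unfolding Y_def using injg by (rule card_image)
  define P where "P = {u::'v\<Rightarrow>'a. (\<forall>k. k \<notin> V \<longrightarrow> u k = 0) \<and> (\<forall>l\<in>I. ipV V u (g l) = 0)}"
  have subP: "fa.subspace P"
    unfolding fa.subspace_def P_def
    by (auto simp: ipV_add_left ipV_scale_left ipV_zero_left)
  have rowP: "rigidity_row p a b \<in> P" if "a \<in> V" "b \<in> V" for a b
    unfolding P_def g_def using row_gmot_orth[OF fin that] that
    by (auto simp: rigidity_row_def)
  have XP: "X \<subseteq> P"
  proof
    fix x assume "x \<in> X"
    then have "x = ?row0 \<or> x \<in> ?R" unfolding X_def using Bw(1) by blast
    then obtain a b where "a \<in> V" "b \<in> V" "x = rigidity_row p a b" using ij Esub by blast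
    then show "x \<in> P" using rowP by simp
  qed
  have spanX: "fa.span X \<subseteq> P" by (rule fa.span_minimal[OF XP subP])
  have disj: "w = 0" if w1: "w \<in> fa.span X" and w2: "w \<in> fa.span Y" for w
  proof -
    have wP: "w \<in> P" using w1 spanX by blast
    let ?Q = "{v. ipV V w v = 0}"
    have subQ: "fa.subspace ?Q"
      unfolding fa.subspace_def by (auto simp: ipV_add_right ipV_scale_right ipV_zero_right)
    have "Y \<subseteq> ?Q" using wP unfolding P_def Y_def by auto
    then have "fa.span Y \<subseteq> ?Q" using subQ by (rule fa.span_minimal)
    then have "ipV V w w = 0" using w2 by blast
    then have "(\<Sum>k\<in>V. w k \<bullet> w k) = 0" unfolding ipV_def .
    then have "\<forall>k\<in>V. w k \<bullet> w k = 0" using sum_nonneg_eq_0_iff[OF fin, of "\<lambda>k. w k \<bullet> w k"] by simp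
    then have "\<forall>k\<in>V. w k = 0" by simp
    moreover have "\<forall>k. k \<notin> V \<longrightarrow> w k = 0" using wP unfolding P_def by blast
    ultimately show "w = 0" by (intro ext) auto
  qed
  have iXY: "fa.independent (X \<union> Y)" and dXY: "X \<inter> Y = {}"
    using fa_indep_union[OF iX iY[folded Y_def] finX finY disj] by blast+
  let ?T = "(\<lambda>(k,w). (\<lambda>k'. if k' = k then w else (0::'a))) ` (V \<times> Basis)"
  have "X \<union> Y \<subseteq> fa.span ?T"
  proof
    fix u assume "u \<in> X \<union> Y"
    then have "\<forall>k. k \<notin> V \<longrightarrow> u k = 0"
      using XP unfolding P_def Y_def g_def gmot_def by auto
    then show "u \<in> fa.span ?T" by (rule supported_in_span[OF fin])
  qed
  from fa.independent_span_bound[OF _ iXY this] have "card (X \<union> Y) \<le> card ?T"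
    using fin by simp
  also have "\<dots> \<le> card (V \<times> (Basis::'a set))" by (rule card_image_le) (use fin in simp)
  also have "\<dots> = card V * ?d" by (simp add: card_cartesian_product)
  finally have le: "card (X \<union> Y) \<le> card V * ?d" .
  have "card (X \<union> Y) = card X + card Y" using card_Un_disjoint[OF finX finY dXY] .
  then have eqc: "card (X \<union> Y) = card V * ?d - (?d + 1 choose 2) + 1 + ((?d + 1) choose 2)"
    using cX cY cBw cI by simp
  have "card S \<le> card V" using S(1) by (rule card_mono[OF fin])
  then have cV: "?d + 1 \<le> card V" using S(3) by simp
  have "(?d + 1) choose 2 = (?d + 1) * ?d div 2" by (simp add: choose_two)
  also have "\<dots> \<le> (?d + 1) * ?d" by simp
  also have "\<dots> \<le> card V * ?d" using cV by (rule mult_right_mono) simp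
  finally have "(?d + 1) choose 2 \<le> card V * ?d" .
  then show False using le eqc by linarith
qed



definition ind :: "'v \<Rightarrow> 'v \<Rightarrow> real" where "ind a b = (if a = b then 1 else 0)"

definition Sm :: "'v \<Rightarrow> 'v \<Rightarrow> 'v \<Rightarrow> 'v \<Rightarrow> real" where
  "Sm i j k l = (ind k i - ind k j) * (ind l i - ind l j)"

lemma Sm_sym: "Sm i j k l = Sm i j l k"
  unfolding Sm_def by simp

lemma Sm_supp: assumes "k \<noteq> l" "Sm i j k l \<noteq> 0" shows "{k, l} = {i, j}"
proof -
  have "ind k i - ind k j \<noteq> 0" "ind l i - ind l j \<noteq> 0" using assms(2) unfolding Sm_def by auto
  then have "k = i \<or> k = j" "l = i \<or> l = j" unfolding ind_def by (auto split: if_splits)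
  then show ?thesis using assms(1) by auto
qed

lemma Sm_ij: "i \<noteq> j \<Longrightarrow> Sm i j i j = -1"
  unfolding Sm_def ind_def by simp

lemma sum_ind_R: fixes f :: "'v \<Rightarrow> 'a::real_vector"
  shows "finite V \<Longrightarrow> i \<in> V \<Longrightarrow> (\<Sum>l\<in>V. (c * ind l i) *\<^sub>R f l) = c *\<^sub>R f i"
proof -
  assume a: "finite V" "i \<in> V"
  have "(\<Sum>l\<in>V. (c * ind l i) *\<^sub>R f l) = (\<Sum>l\<in>V. if l = i then c *\<^sub>R f l else 0)"
    by (intro sum.cong refl) (simp add: ind_def)
  also have "\<dots> = c *\<^sub>R f i" using a by simp
  finally show ?thesis .
qed

lemma sum_ind: "finite V \<Longrightarrow> i \<in> V \<Longrightarrow> (\<Sum>l\<in>V. c * ind l i) = c"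
  using sum_ind_R[of V i c "\<lambda>_. 1::real"] by simp

lemma Sm_split: "Sm i j k l = (ind k i - ind k j) * ind l i - (ind k i - ind k j) * ind l j"
  unfolding Sm_def by (simp add: right_diff_distrib)

lemma Sm_rowsum: assumes "finite V" "i \<in> V" "j \<in> V" shows "(\<Sum>l\<in>V. Sm i j k l) = 0"
proof -
  have "(\<Sum>l\<in>V. Sm i j k l) = (\<Sum>l\<in>V. (ind k i - ind k j) * ind l i) - (\<Sum>l\<in>V. (ind k i - ind k j) * ind l j)"
    unfolding Sm_split by (rule sum_subtractf)
  also have "\<dots> = 0" using assms by (simp add: sum_ind)
  finally show ?thesis .
qed

lemma Sm_load: assumes "finite V" "i \<in> V" "j \<in> V"
  shows "(\<Sum>l\<in>V. Sm i j k l *\<^sub>R p l) = rigidity_row p i j k"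
proof -
  have "(\<Sum>l\<in>V. Sm i j k l *\<^sub>R p l) = (\<Sum>l\<in>V. ((ind k i - ind k j) * ind l i) *\<^sub>R p l) - (\<Sum>l\<in>V. ((ind k i - ind k j) * ind l j) *\<^sub>R p l)"
    unfolding Sm_split scaleR_diff_left by (rule sum_subtractf)
  also have "\<dots> = (ind k i - ind k j) *\<^sub>R p i - (ind k i - ind k j) *\<^sub>R p j" using assms by (simp only: sum_ind_R)
  also have "\<dots> = rigidity_row p i j k"
    unfolding rigidity_row_def ind_def by (auto simp: scaleR_diff_right)
  finally show ?thesis .
qed

lemma stress_rowsum: assumes "stress_matrix V E p M" "i \<in> V" shows "(\<Sum>j\<in>V. M i j) = 0"
proof -
  have "\<forall>i\<in>V. (\<Sum>j\<in>V. M i j) = 0" using assms(1) unfolding stress_matrix_def by (elim conjE) assumption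
  then show ?thesis using assms(2) by blast
qed

lemma stress_load: assumes "stress_matrix V E p M" "i \<in> V" shows "(\<Sum>j\<in>V. M i j *\<^sub>R p j) = 0"
proof -
  have "\<forall>i\<in>V. (\<Sum>j\<in>V. M i j *\<^sub>R p j) = 0" using assms(1) unfolding stress_matrix_def by (elim conjE) assumption
  then show ?thesis using assms(2) by blast
qed

lemma stress_zero: assumes "stress_matrix V E p M" "i \<in> V" "j \<in> V" "i \<noteq> j" "{i,j} \<notin> E"
  shows "M i j = 0"
proof -
  have "\<forall>i\<in>V. \<forall>j\<in>V. i \<noteq> j \<and> {i, j} \<notin> E \<longrightarrow> M i j = 0"
    using assms(1) unfolding stress_matrix_def by (elim conjE) assumption
  then show ?thesis using assms(2-5) by blast
qed

lemma stress_mono: assumes "stress_matrix V E p M" "E \<subseteq> E'" shows "stress_matrix V E' p M"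
  unfolding stress_matrix_def
proof (intro conjI ballI impI)
  fix i j assume "i \<in> V" "j \<in> V" then show "M i j = M j i" using stress_sym[OF assms(1)] by blast
next
  fix i j assume "i \<in> V" "j \<in> V" "i \<noteq> j \<and> {i, j} \<notin> E'"
  then show "M i j = 0" using stress_zero[OF assms(1)] assms(2) by blast
next
  fix i assume "i \<in> V" then show "(\<Sum>j\<in>V. M i j) = 0" by (rule stress_rowsum[OF assms(1)])
next
  fix i assume "i \<in> V" then show "(\<Sum>j\<in>V. M i j *\<^sub>R p j) = 0" by (rule stress_load[OF assms(1)])
qed

lemma stress_lincomb:
  assumes fin: "finite P" and st: "\<forall>x\<in>P. stress_matrix V E p (M x)"
  shows "stress_matrix V E p (\<lambda>k l. \<Sum>x\<in>P. c x * M x k l)"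
  unfolding stress_matrix_def
proof (intro conjI ballI impI)
  fix i j assume "i \<in> V" "j \<in> V"
  then show "(\<Sum>x\<in>P. c x * M x i j) = (\<Sum>x\<in>P. c x * M x j i)"
  proof (intro sum.cong refl)
    fix x assume "x \<in> P"
    then have "\<forall>i\<in>V. \<forall>j\<in>V. M x i j = M x j i" using st stress_sym[of V E p "M x"] by blast
    then show "c x * M x i j = c x * M x j i" using \<open>i \<in> V\<close> \<open>j \<in> V\<close> by simp
  qed
next
  fix i j assume ij: "i \<in> V" "j \<in> V" "i \<noteq> j \<and> {i, j} \<notin> E"
  have "M x i j = 0" if "x \<in> P" for x
    using stress_zero[of V E p "M x" i j] st that ij by blast
  then show "(\<Sum>x\<in>P. c x * M x i j) = 0" by simp
next
  fix i assume i: "i \<in> V"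
  have "(\<Sum>j\<in>V. \<Sum>x\<in>P. c x * M x i j) = (\<Sum>x\<in>P. \<Sum>j\<in>V. c x * M x i j)"
    by (rule sum.swap)
  also have "\<dots> = (\<Sum>x\<in>P. c x * (\<Sum>j\<in>V. M x i j))"
    by (simp only: sum_distrib_left)
  also have "\<dots> = 0"
  proof (intro sum.neutral ballI)
    fix x assume "x \<in> P"
    then have "stress_matrix V E p (M x)" using st by blast
    then show "c x * (\<Sum>j\<in>V. M x i j) = 0" using stress_rowsum[of V E p "M x" i] i by simp
  qed
  finally show "(\<Sum>j\<in>V. \<Sum>x\<in>P. c x * M x i j) = 0" .
next
  fix i assume i: "i \<in> V"
  have "(\<Sum>j\<in>V. (\<Sum>x\<in>P. c x * M x i j) *\<^sub>R p j) = (\<Sum>j\<in>V. \<Sum>x\<in>P. (c x * M x i j) *\<^sub>R p j)"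
    by (simp only: scaleR_sum_left)
  also have "\<dots> = (\<Sum>x\<in>P. \<Sum>j\<in>V. (c x * M x i j) *\<^sub>R p j)"
    by (rule sum.swap)
  also have "\<dots> = (\<Sum>x\<in>P. c x *\<^sub>R (\<Sum>j\<in>V. M x i j *\<^sub>R p j))"
    by (simp add: scaleR_sum_right)
  also have "\<dots> = 0"
  proof (intro sum.neutral ballI)
    fix x assume "x \<in> P"
    then have "stress_matrix V E p (M x)" using st by blast
    then show "c x *\<^sub>R (\<Sum>j\<in>V. M x i j *\<^sub>R p j) = 0" using stress_load[of V E p "M x" i] i by simp
  qed
  finally show "(\<Sum>j\<in>V. (\<Sum>x\<in>P. c x * M x i j) *\<^sub>R p j) = 0" .
qed

lemma exists_D:
  fixes p :: "'v \<Rightarrow> 'a::euclidean_space"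
  assumes gr: "graph_on V E" and S: "S \<subseteq> V" "inj_on p S" "card S = DIM('a)+1" "\<not> affine_dependent (p ` S)"
    and rig: "inf_rigid V E p" and ij: "i0 \<in> V" "j0 \<in> V" "i0 \<noteq> j0" "{i0,j0} \<notin> E"
  shows "\<exists>D. stress_matrix V (E \<union> {{i0,j0}}) p D \<and> D i0 j0 = -1"
proof -
  let ?R = "{rigidity_row p i j | i j. {i, j} \<in> E}"
  have fin: "finite V" using gr unfolding graph_on_def by blast
  have Esub: "i \<in> V \<and> j \<in> V" if "{i,j} \<in> E" for i j using gr that unfolding graph_on_def by blast
  have finR: "finite ?R"
  proof (rule finite_subset[of _ "(\<lambda>(i,j). rigidity_row p i j) ` (V \<times> V)"])
    show "?R \<subseteq> (\<lambda>(i,j). rigidity_row p i j) ` (V \<times> V)"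
    proof
      fix x assume "x \<in> ?R"
      then obtain i j where "x = rigidity_row p i j" "{i,j} \<in> E" by blast
      then show "x \<in> (\<lambda>(i,j). rigidity_row p i j) ` (V \<times> V)" using Esub by force
    qed
  qed (use fin in simp)
  have "rigidity_row p i0 j0 \<in> fa.span ?R" by (rule row_in_span[OF gr S rig ij(1,2)])
  then obtain u where u: "rigidity_row p i0 j0 = (\<Sum>v\<in>?R. (\<lambda>k. u v *\<^sub>R v k))"
    unfolding fa.span_finite[OF finR] by blast
  have "\<forall>v\<in>?R. \<exists>ij. {fst ij, snd ij} \<in> E \<and> v = rigidity_row p (fst ij) (snd ij)"
  proof
    fix v assume "v \<in> ?R"
    then obtain i j where "v = rigidity_row p i j" "{i,j} \<in> E" by blast
    then show "\<exists>ij. {fst ij, snd ij} \<in> E \<and> v = rigidity_row p (fst ij) (snd ij)"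
      by (intro exI[of _ "(i,j)"]) simp
  qed
  from bchoice[OF this] obtain h where h: "\<forall>v\<in>?R. {fst (h v), snd (h v)} \<in> E \<and> v = rigidity_row p (fst (h v)) (snd (h v))"
    by blast
  have hE: "{fst (h v), snd (h v)} \<in> E" if "v \<in> ?R" for v using h[rule_format, OF that] by (rule conjunct1)
  have hR: "v = rigidity_row p (fst (h v)) (snd (h v))" if "v \<in> ?R" for v using h[rule_format, OF that] by (rule conjunct2)
  have hV1: "fst (h v) \<in> V" if "v \<in> ?R" for v using Esub[OF hE[OF that]] by (rule conjunct1)
  have hV2: "snd (h v) \<in> V" if "v \<in> ?R" for v using Esub[OF hE[OF that]] by (rule conjunct2)
  define \<Omega>1 where "\<Omega>1 = (\<lambda>k l. \<Sum>v\<in>?R. u v * Sm (fst (h v)) (snd (h v)) k l)"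
  define D where "D = (\<lambda>k l. Sm i0 j0 k l - \<Omega>1 k l)"
  have load1: "(\<Sum>l\<in>V. \<Omega>1 k l *\<^sub>R p l) = rigidity_row p i0 j0 k" for k
  proof -
    have "(\<Sum>l\<in>V. \<Omega>1 k l *\<^sub>R p l) = (\<Sum>l\<in>V. \<Sum>v\<in>?R. (u v * Sm (fst (h v)) (snd (h v)) k l) *\<^sub>R p l)"
      unfolding \<Omega>1_def scaleR_sum_left ..
    also have "\<dots> = (\<Sum>v\<in>?R. \<Sum>l\<in>V. (u v * Sm (fst (h v)) (snd (h v)) k l) *\<^sub>R p l)"
      by (rule sum.swap)
    also have "\<dots> = (\<Sum>v\<in>?R. u v *\<^sub>R (\<Sum>l\<in>V. Sm (fst (h v)) (snd (h v)) k l *\<^sub>R p l))"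
      by (simp add: scaleR_sum_right)
    also have "\<dots> = (\<Sum>v\<in>?R. u v *\<^sub>R v k)"
    proof (intro sum.cong refl)
      fix v assume v: "v \<in> ?R"
      have "(\<Sum>l\<in>V. Sm (fst (h v)) (snd (h v)) k l *\<^sub>R p l) = rigidity_row p (fst (h v)) (snd (h v)) k"
        by (rule Sm_load[OF fin hV1[OF v] hV2[OF v]])
      also have "\<dots> = v k"
      proof -
        show ?thesis using hR[OF v] by simp
      qed
      finally show "u v *\<^sub>R (\<Sum>l\<in>V. Sm (fst (h v)) (snd (h v)) k l *\<^sub>R p l) = u v *\<^sub>R v k" by simp
    qed
    also have "\<dots> = rigidity_row p i0 j0 k" unfolding u sum_fun_apply ..
    finally show ?thesis .
  qed
  have rs1: "(\<Sum>l\<in>V. \<Omega>1 k l) = 0" for k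
  proof -
    have "(\<Sum>l\<in>V. \<Omega>1 k l) = (\<Sum>v\<in>?R. u v * (\<Sum>l\<in>V. Sm (fst (h v)) (snd (h v)) k l))"
      unfolding \<Omega>1_def sum_distrib_left by (rule sum.swap)
    also have "\<dots> = 0"
    proof (intro sum.neutral ballI)
      fix v assume v: "v \<in> ?R"
      show "u v * (\<Sum>l\<in>V. Sm (fst (h v)) (snd (h v)) k l) = 0"
        using Sm_rowsum[OF fin hV1[OF v] hV2[OF v]] by simp
    qed
    finally show ?thesis .
  qed
  have z1: "\<Omega>1 k l = 0" if "k \<noteq> l" "{k,l} \<notin> E" for k l
    unfolding \<Omega>1_def
  proof (intro sum.neutral ballI)
    fix v assume v: "v \<in> ?R"
    have "Sm (fst (h v)) (snd (h v)) k l = 0"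
    proof (rule ccontr)
      assume "Sm (fst (h v)) (snd (h v)) k l \<noteq> 0"
      then have "{k, l} = {fst (h v), snd (h v)}" by (rule Sm_supp[OF that(1)])
      moreover have "{fst (h v), snd (h v)} \<in> E" using hE[OF v] .
      ultimately show False using that(2) by simp
    qed
    then show "u v * Sm (fst (h v)) (snd (h v)) k l = 0" by simp
  qed
  have "stress_matrix V (E \<union> {{i0,j0}}) p D"
    unfolding stress_matrix_def
  proof (intro conjI ballI impI)
    fix k l assume "k \<in> V" "l \<in> V"
    show "D k l = D l k" unfolding D_def \<Omega>1_def by (simp add: Sm_sym[of i0 j0 k l] Sm_sym[of _ _ k l])
  next
    fix k l assume kl: "k \<in> V" "l \<in> V" "k \<noteq> l \<and> {k, l} \<notin> E \<union> {{i0, j0}}"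
    have "Sm i0 j0 k l = 0"
    proof (rule ccontr)
      assume "Sm i0 j0 k l \<noteq> 0"
      moreover have "k \<noteq> l" using kl(3) by simp
      ultimately have "{k, l} = {i0, j0}" using Sm_supp[of k l i0 j0] by simp
      then show False using kl(3) by simp
    qed
    moreover have "\<Omega>1 k l = 0" using z1[of k l] kl(3) by simp
    ultimately show "D k l = 0" unfolding D_def by simp
  next
    fix k assume "k \<in> V"
    show "(\<Sum>l\<in>V. D k l) = 0" unfolding D_def
      by (simp add: sum_subtractf Sm_rowsum[OF fin ij(1,2)] rs1)
  next
    fix k assume "k \<in> V"
    have "(\<Sum>l\<in>V. D k l *\<^sub>R p l) = (\<Sum>l\<in>V. Sm i0 j0 k l *\<^sub>R p l) - (\<Sum>l\<in>V. \<Omega>1 k l *\<^sub>R p l)"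
      unfolding D_def by (simp add: scaleR_diff_left sum_subtractf)
    also have "\<dots> = 0" by (simp add: Sm_load[OF fin ij(1,2)] load1)
    finally show "(\<Sum>l\<in>V. D k l *\<^sub>R p l) = 0" .
  qed
  moreover have "D i0 j0 = -1" unfolding D_def using Sm_ij[OF ij(3)] z1[OF ij(3,4)] by simp
  ultimately show ?thesis by blast
qed



lemma ext0_sum:
  fixes q :: "'v \<Rightarrow> 'a::real_vector"
  assumes fin: "finite V" and WV: "W \<subseteq> V"
  shows "(\<Sum>l\<in>V. ext0 W M k l *\<^sub>R q l) = (if k \<in> W then (\<Sum>l\<in>W. M k l *\<^sub>R q l) else 0)"
proof (cases "k \<in> W")
  case True
  have "(\<Sum>l\<in>V. ext0 W M k l *\<^sub>R q l) = (\<Sum>l\<in>V. if l \<in> W then M k l *\<^sub>R q l else 0)"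
    unfolding ext0_def using True by (intro sum.cong refl) simp
  also have "\<dots> = (\<Sum>l\<in>V \<inter> W. M k l *\<^sub>R q l)" by (rule sum.inter_restrict[OF fin, symmetric])
  also have "V \<inter> W = W" using WV by blast
  finally show ?thesis using True by simp
next
  case False then show ?thesis unfolding ext0_def by simp
qed

lemma ext0_sum_real:
  assumes fin: "finite V" and WV: "W \<subseteq> V"
  shows "(\<Sum>l\<in>V. ext0 W M k l) = (if k \<in> W then (\<Sum>l\<in>W. M k l) else 0)"
  using ext0_sum[OF fin WV, of M k "\<lambda>_. 1::real"] by simp

lemma QF_ext0:
  assumes fin: "finite V" and WV: "W \<subseteq> V"
  shows "QF V (ext0 W M) x = QF W M x"
proof -
  have "QF V (ext0 W M) x = (\<Sum>i\<in>V. if i \<in> W then (\<Sum>j\<in>V. if j \<in> W then x i * M i j * x j else 0) else 0)"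
    unfolding QF_def ext0_def by (intro sum.cong refl) (auto intro!: sum.cong)
  also have "\<dots> = (\<Sum>i\<in>V \<inter> W. (\<Sum>j\<in>V \<inter> W. x i * M i j * x j))"
    by (simp add: sum.inter_restrict[OF fin])
  also have "V \<inter> W = W" using WV by blast
  finally show ?thesis unfolding QF_def .
qed

lemma QF_lin3: "QF V (\<lambda>i j. a * A i j + B i j + C i j) x = a * QF V A x + QF V B x + QF V C x"
  unfolding QF_def by (simp add: sum.distrib sum_distrib_left algebra_simps)

theorem theorem7:
  fixes VA VB :: "'v set" and EA EB :: "'v set set"
    and pA pB :: "'v \<Rightarrow> 'a::euclidean_space"
    and \<Omega>A \<Omega>B :: "'v \<Rightarrow> 'v \<Rightarrow> real"
  assumes gA: "graph_on VA EA" and gB: "graph_on VB EB"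
    and genA: "general_position VA pA" and genB: "general_position VB pB"
    and propA: "VA \<inter> VB \<subset> VA" and propB: "VA \<inter> VB \<subset> VB"
    and cardC: "card (VA \<inter> VB) \<ge> DIM('a) + 1"
    and agree: "\<forall>i\<in>VA \<inter> VB. pA i = pB i"
    and stA: "stress_matrix VA EA pA \<Omega>A" and psdA: "psd_on VA \<Omega>A"
    and nullA: "nullity_on VA \<Omega>A = DIM('a) + 1"
    and stB: "stress_matrix VB EB pB \<Omega>B" and psdB: "psd_on VB \<Omega>B"
    and nullB: "nullity_on VB \<Omega>B = DIM('a) + 1"
    and rigA: "inf_rigid VA EA pA"
  defines "F \<equiv> {e \<in> EB - EA. e \<subseteq> VA \<inter> VB}"
    and "p \<equiv> (\<lambda>i. if i \<in> VA then pA i else pB i)"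
  shows "\<exists>\<Omega>AK :: 'v \<Rightarrow> 'v \<Rightarrow> real.
           stress_matrix VA (EA \<union> F) pA \<Omega>AK \<and>
           (\<forall>i j. {i, j} \<in> F \<longrightarrow> \<Omega>AK i j = - \<Omega>B i j) \<and>
           (\<exists>c0>0. \<forall>c\<ge>c0.
              (let \<Omega>re = (\<lambda>i j. c * ext0 VA \<Omega>A i j + ext0 VA \<Omega>AK i j + ext0 VB \<Omega>B i j)
               in stress_matrix (VA \<union> VB) ((EA \<union> EB) - F) p \<Omega>re \<and>
                  psd_on (VA \<union> VB) \<Omega>re \<and>
                  nullity_on (VA \<union> VB) \<Omega>re = DIM('a) + 1))"
proof -
  let ?d = "DIM('a)"
  have finA: "finite VA" using gA unfolding graph_on_def by blast
  have finB: "finite VB" using gB unfolding graph_on_def by blast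
  have finV: "finite (VA \<union> VB)" using finA finB by simp
  obtain S0 where S0: "S0 \<subseteq> VA \<inter> VB" "finite S0" "card S0 = ?d + 1" "inj_on pA S0"
      "\<not> affine_dependent (pA ` S0)"
    using gp_subset[OF genA Int_lower1 cardC] by blast
  have S0A: "S0 \<subseteq> VA" and S0B: "S0 \<subseteq> VB" using S0(1) by auto
  have pAB: "pB i = pA i" if "i \<in> S0" for i
  proof -
    have "i \<in> VA \<inter> VB" using S0(1) that by blast
    then have "pA i = pB i" using agree by blast
    then show ?thesis by simp
  qed
  have injB: "inj_on pB S0" using S0(4) pAB unfolding inj_on_def by simp
  have imB: "pB ` S0 = pA ` S0" by (rule image_cong) (use pAB in auto)
  have pA_p: "p i = pA i" if "i \<in> VA" for i using that unfolding p_def by simp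
  have pB_p: "p i = pB i" if "i \<in> VB" for i using that agree unfolding p_def by auto
  have "inj_on p S0 = inj_on pA S0" by (rule inj_on_cong) (use pA_p S0A in auto)
  then have injp: "inj_on p S0" using S0(4) by simp
  have imp: "p ` S0 = pA ` S0" by (rule image_cong) (use pA_p S0A in auto)
  have inj0: "\<forall>a b. (\<forall>i\<in>VA. a \<bullet> pA i + b = 0) \<longrightarrow> a = 0 \<and> b = 0"
  proof (intro allI impI)
    fix a b assume "\<forall>i\<in>VA. a \<bullet> pA i + b = 0"
    then have "\<forall>i\<in>S0. a \<bullet> pA i + b = 0" using S0A by blast
    then show "a = 0 \<and> b = 0" by (rule affine_indep_zero[OF S0(4,3,5)])
  qed
  have kerA: "kernel_on VA \<Omega>A = range (\<lambda>(a,b). aff VA pA a b)"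
    by (rule kernel_eq_aff[OF stA nullA S0A S0(4,3,5)])
  have kerB: "kernel_on VB \<Omega>B = range (\<lambda>(a,b). aff VB pB a b)"
    by (rule kernel_eq_aff[OF stB nullB S0B injB]) (simp_all add: S0(3) imB S0(5))
  have Fprop: "i \<in> VA \<and> i \<in> VB \<and> j \<in> VA \<and> j \<in> VB \<and> i \<noteq> j \<and> {i,j} \<notin> EA \<and> {i,j} \<in> EB"
    if "{i,j} \<in> F" for i j
  proof -
    from that have F1: "{i,j} \<in> EB" "{i,j} \<notin> EA" "{i,j} \<subseteq> VA \<inter> VB" unfolding F_def by auto
    have "card {i,j} = 2" using gB F1(1) unfolding graph_on_def by blast
    then have "i \<noteq> j" by (cases "i = j") auto
    with F1 show ?thesis by auto
  qed
  define P where "P = {(i,j). {i,j} \<in> F}"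
  have finP: "finite P"
  proof (rule finite_subset[of _ "VA \<times> VA"])
    show "P \<subseteq> VA \<times> VA" unfolding P_def using Fprop by auto
  qed (use finA in simp)
  have "\<forall>x\<in>P. \<exists>D. stress_matrix VA (EA \<union> {{fst x, snd x}}) pA D \<and> D (fst x) (snd x) = -1"
  proof
    fix x assume "x \<in> P"
    then obtain i j where x: "x = (i,j)" "{i,j} \<in> F" unfolding P_def by auto
    have "i \<in> VA" "j \<in> VA" "i \<noteq> j" "{i,j} \<notin> EA" using Fprop[OF x(2)] by auto
    from exists_D[OF gA S0A S0(4,3,5) rigA this]
    show "\<exists>D. stress_matrix VA (EA \<union> {{fst x, snd x}}) pA D \<and> D (fst x) (snd x) = -1"
      by (simp add: x)
  qed
  from bchoice[OF this] obtain Df where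
    Df: "\<forall>x\<in>P. stress_matrix VA (EA \<union> {{fst x, snd x}}) pA (Df x) \<and> Df x (fst x) (snd x) = -1"
    by blast
  have Dst: "stress_matrix VA (EA \<union> {{fst x, snd x}}) pA (Df x)" if "x \<in> P" for x
    using Df[rule_format, OF that] by (rule conjunct1)
  have Dm1: "Df x (fst x) (snd x) = -1" if "x \<in> P" for x
    using Df[rule_format, OF that] by (rule conjunct2)
  define \<Omega>AK where "\<Omega>AK = (\<lambda>k l. \<Sum>x\<in>P. (\<Omega>B (fst x) (snd x) / 2) * Df x k l)"
  have stAK: "stress_matrix VA (EA \<union> F) pA \<Omega>AK"
    unfolding \<Omega>AK_def
  proof (rule stress_lincomb[OF finP, of VA "EA \<union> F" pA Df "\<lambda>x. \<Omega>B (fst x) (snd x) / 2"], rule ballI)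
    fix x assume x: "x \<in> P"
    have "{fst x, snd x} \<in> F" using x unfolding P_def by auto
    then show "stress_matrix VA (EA \<union> F) pA (Df x)" by (intro stress_mono[OF Dst[OF x]]) auto
  qed
  have entry: "\<Omega>AK a b = - \<Omega>B a b" if ab: "{a,b} \<in> F" for a b
  proof -
    have Fa: "a \<in> VA" "a \<in> VB" "b \<in> VA" "b \<in> VB" "a \<noteq> b" "{a,b} \<notin> EA" using Fprop[OF ab] by auto
    have Pab: "(a,b) \<in> P" "(b,a) \<in> P" using ab unfolding P_def by (auto simp: insert_commute)
    have zero: "(\<Omega>B (fst x) (snd x) / 2) * Df x a b = 0" if x: "x \<in> P - {(a,b),(b,a)}" for x
    proof -
      have xP: "x \<in> P" using x by blast
      have "{a,b} \<noteq> {fst x, snd x}" using x by (cases x) (auto simp: doubleton_eq_iff)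
      then have "{a,b} \<notin> EA \<union> {{fst x, snd x}}" using Fa(6) by simp
      then have "Df x a b = 0" by (rule stress_zero[OF Dst[OF xP] Fa(1) Fa(3) Fa(5)])
      then show ?thesis by simp
    qed
    have "\<Omega>AK a b = (\<Sum>x\<in>{(a,b),(b,a)}. (\<Omega>B (fst x) (snd x) / 2) * Df x a b)"
      unfolding \<Omega>AK_def by (rule sum.mono_neutral_right[OF finP]) (use Pab zero in auto)
    also have "\<dots> = (\<Omega>B a b / 2) * Df (a,b) a b + (\<Omega>B b a / 2) * Df (b,a) a b" using Fa(5) by simp
    finally have e1: "\<Omega>AK a b = (\<Omega>B a b / 2) * Df (a,b) a b + (\<Omega>B b a / 2) * Df (b,a) a b" .
    have d1: "Df (a,b) a b = -1" using Dm1[OF Pab(1)] by simp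
    have "Df (b,a) b a = -1" using Dm1[OF Pab(2)] by simp
    moreover have "Df (b,a) a b = Df (b,a) b a" using stress_sym[OF Dst[OF Pab(2)]] Fa(1,3) by blast
    ultimately have d2: "Df (b,a) a b = -1" by simp
    have "\<Omega>B b a = \<Omega>B a b" using stress_sym[OF stB] Fa(2,4) by blast
    then show ?thesis using e1 d1 d2 by simp
  qed
  obtain c where c: "c \<ge> 0" "\<forall>x. 0 \<le> QF VA \<Omega>AK x + c * QF VA \<Omega>A x"
    using psd_dominate[OF finA psdA equalityD1[OF kerA] stA stAK inj0] by blast
  show ?thesis
  proof (intro exI[of _ \<Omega>AK] conjI allI impI)
    show "stress_matrix VA (EA \<union> F) pA \<Omega>AK" by (rule stAK)
  next
    fix i j assume "{i, j} \<in> F" then show "\<Omega>AK i j = - \<Omega>B i j" by (rule entry)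
  next
    show "\<exists>c0>0. \<forall>c\<ge>c0. let \<Omega>re = (\<lambda>i j. c * ext0 VA \<Omega>A i j + ext0 VA \<Omega>AK i j + ext0 VB \<Omega>B i j)
         in stress_matrix (VA \<union> VB) ((EA \<union> EB) - F) p \<Omega>re \<and> psd_on (VA \<union> VB) \<Omega>re \<and>
            nullity_on (VA \<union> VB) \<Omega>re = DIM('a) + 1"
    proof (intro exI[of _ "c + 1"] conjI allI impI)
      show "c + 1 > 0" using c(1) by simp
    next
      fix cc assume cc: "c + 1 \<le> cc"
      define \<Omega>re where "\<Omega>re = (\<lambda>i j. cc * ext0 VA \<Omega>A i j + ext0 VA \<Omega>AK i j + ext0 VB \<Omega>B i j)"
      have st_re: "stress_matrix (VA \<union> VB) ((EA \<union> EB) - F) p \<Omega>re"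
        unfolding stress_matrix_def
      proof (intro conjI ballI impI)
        fix k l assume k: "k \<in> VA \<union> VB" and l: "l \<in> VA \<union> VB"
        have "ext0 VA \<Omega>A k l = ext0 VA \<Omega>A l k" using stress_sym[OF stA] unfolding ext0_def by auto
        moreover have "ext0 VA \<Omega>AK k l = ext0 VA \<Omega>AK l k" using stress_sym[OF stAK] unfolding ext0_def by auto
        moreover have "ext0 VB \<Omega>B k l = ext0 VB \<Omega>B l k" using stress_sym[OF stB] unfolding ext0_def by auto
        ultimately show "\<Omega>re k l = \<Omega>re l k" unfolding \<Omega>re_def by simp
      next
        fix k l assume k: "k \<in> VA \<union> VB" and l: "l \<in> VA \<union> VB" and kl: "k \<noteq> l \<and> {k, l} \<notin> EA \<union> EB - F"
        show "\<Omega>re k l = 0"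
        proof (cases "{k,l} \<in> F")
          case True
          have Fk: "k \<in> VA" "k \<in> VB" "l \<in> VA" "l \<in> VB" "k \<noteq> l" "{k,l} \<notin> EA" using Fprop[OF True] by auto
          have "\<Omega>A k l = 0" by (rule stress_zero[OF stA Fk(1) Fk(3) Fk(5) Fk(6)])
          moreover have "\<Omega>AK k l = - \<Omega>B k l" by (rule entry[OF True])
          ultimately show ?thesis unfolding \<Omega>re_def ext0_def using Fk by simp
        next
          case False
          then have nE: "{k,l} \<notin> EA" "{k,l} \<notin> EB" "{k,l} \<notin> EA \<union> F" using kl by auto
          have "ext0 VA \<Omega>A k l = 0"
          proof (cases "k \<in> VA \<and> l \<in> VA")
            case True then show ?thesis unfolding ext0_def using stress_zero[OF stA _ _ _ nE(1)] kl by simp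
          next
            case False then show ?thesis unfolding ext0_def by auto
          qed
          moreover have "ext0 VA \<Omega>AK k l = 0"
          proof (cases "k \<in> VA \<and> l \<in> VA")
            case True then show ?thesis unfolding ext0_def using stress_zero[OF stAK _ _ _ nE(3)] kl by simp
          next
            case False then show ?thesis unfolding ext0_def by auto
          qed
          moreover have "ext0 VB \<Omega>B k l = 0"
          proof (cases "k \<in> VB \<and> l \<in> VB")
            case True then show ?thesis unfolding ext0_def using stress_zero[OF stB _ _ _ nE(2)] kl by simp
          next
            case False then show ?thesis unfolding ext0_def by auto
          qed
          ultimately show ?thesis unfolding \<Omega>re_def by simp
        qed
      next
        fix k assume k: "k \<in> VA \<union> VB"
        have "(\<Sum>l\<in>VA \<union> VB. \<Omega>re k l) = cc * (\<Sum>l\<in>VA \<union> VB. ext0 VA \<Omega>A k l)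
            + (\<Sum>l\<in>VA \<union> VB. ext0 VA \<Omega>AK k l) + (\<Sum>l\<in>VA \<union> VB. ext0 VB \<Omega>B k l)"
          unfolding \<Omega>re_def by (simp add: sum.distrib sum_distrib_left)
        also have "\<dots> = 0"
          using ext0_sum_real[OF finV, of VA \<Omega>A k] ext0_sum_real[OF finV, of VA \<Omega>AK k]
            ext0_sum_real[OF finV, of VB \<Omega>B k]
            stress_rowsum[OF stA, of k] stress_rowsum[OF stAK, of k] stress_rowsum[OF stB, of k]
          by simp
        finally show "(\<Sum>l\<in>VA \<union> VB. \<Omega>re k l) = 0" .
      next
        fix k assume k: "k \<in> VA \<union> VB"
        have eA: "(\<Sum>l\<in>VA. M l *\<^sub>R p l) = (\<Sum>l\<in>VA. M l *\<^sub>R pA l)" for M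
          by (intro sum.cong refl) (simp add: pA_p)
        have eB: "(\<Sum>l\<in>VB. M l *\<^sub>R p l) = (\<Sum>l\<in>VB. M l *\<^sub>R pB l)" for M
          by (intro sum.cong refl) (simp add: pB_p)
        have "(\<Sum>l\<in>VA \<union> VB. \<Omega>re k l *\<^sub>R p l) = cc *\<^sub>R (\<Sum>l\<in>VA \<union> VB. ext0 VA \<Omega>A k l *\<^sub>R p l)
            + (\<Sum>l\<in>VA \<union> VB. ext0 VA \<Omega>AK k l *\<^sub>R p l) + (\<Sum>l\<in>VA \<union> VB. ext0 VB \<Omega>B k l *\<^sub>R p l)"
          unfolding \<Omega>re_def by (simp add: sum.distrib scaleR_sum_right scaleR_add_left)
        also have "\<dots> = 0"
          using ext0_sum[OF finV, of VA \<Omega>A k p] ext0_sum[OF finV, of VA \<Omega>AK k p]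
            ext0_sum[OF finV, of VB \<Omega>B k p] eA eB
            stress_load[OF stA, of k] stress_load[OF stAK, of k] stress_load[OF stB, of k]
          by simp
        finally show "(\<Sum>l\<in>VA \<union> VB. \<Omega>re k l *\<^sub>R p l) = 0" .
      qed
      have QFre: "QF (VA \<union> VB) \<Omega>re x = cc * QF VA \<Omega>A x + QF VA \<Omega>AK x + QF VB \<Omega>B x" for x
      proof -
        have "QF (VA \<union> VB) \<Omega>re x = cc * QF (VA \<union> VB) (ext0 VA \<Omega>A) x + QF (VA \<union> VB) (ext0 VA \<Omega>AK) x
            + QF (VA \<union> VB) (ext0 VB \<Omega>B) x" unfolding \<Omega>re_def by (rule QF_lin3)
        then show ?thesis by (simp add: QF_ext0[OF finV])
      qed
      have split: "QF (VA \<union> VB) \<Omega>re x = (cc - c) * QF VA \<Omega>A x + (QF VA \<Omega>AK x + c * QF VA \<Omega>A x) + QF VB \<Omega>B x" for x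
        unfolding QFre by (simp add: algebra_simps)
      have nn: "0 \<le> (cc - c) * QF VA \<Omega>A x" "0 \<le> QF VA \<Omega>AK x + c * QF VA \<Omega>A x" "0 \<le> QF VB \<Omega>B x" for x
      proof -
        show "0 \<le> (cc - c) * QF VA \<Omega>A x" using cc psd_QF[OF psdA, of x] by simp
        show "0 \<le> QF VA \<Omega>AK x + c * QF VA \<Omega>A x" using c(2) by blast
        show "0 \<le> QF VB \<Omega>B x" by (rule psd_QF[OF psdB])
      qed
      have psd_re: "psd_on (VA \<union> VB) \<Omega>re"
        unfolding psd_on_def
      proof
        fix x
        have "0 \<le> QF (VA \<union> VB) \<Omega>re x" unfolding split using nn[of x] by linarith
        then show "0 \<le> (\<Sum>i\<in>VA \<union> VB. \<Sum>j\<in>VA \<union> VB. x i * \<Omega>re i j * x j)" unfolding QF_def .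
      qed
      have ker_re: "kernel_on (VA \<union> VB) \<Omega>re = range (\<lambda>(a,b). aff (VA \<union> VB) p a b)"
      proof
        show "range (\<lambda>(a,b). aff (VA \<union> VB) p a b) \<subseteq> kernel_on (VA \<union> VB) \<Omega>re"
          using aff_in_kernel[OF st_re] by auto
        show "kernel_on (VA \<union> VB) \<Omega>re \<subseteq> range (\<lambda>(a,b). aff (VA \<union> VB) p a b)"
        proof
          fix x assume x: "x \<in> kernel_on (VA \<union> VB) \<Omega>re"
          have "QF (VA \<union> VB) \<Omega>re x = 0" by (rule QF_kernel[OF x])
          then have z: "(cc - c) * QF VA \<Omega>A x + (QF VA \<Omega>AK x + c * QF VA \<Omega>A x) + QF VB \<Omega>B x = 0"
            unfolding split .
          have z1: "(cc - c) * QF VA \<Omega>A x = 0" and qb: "QF VB \<Omega>B x = 0" using z nn[of x] by linarith+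
          have "cc - c \<noteq> 0" using cc by simp
          then have qa: "QF VA \<Omega>A x = 0" using z1 by simp
          have kA: "(\<Sum>j\<in>VA. \<Omega>A i j * x j) = 0" if "i \<in> VA" for i
            by (rule psd_zero_kernel[OF finA psdA stress_sym[OF stA] qa that])
          have kB: "(\<Sum>j\<in>VB. \<Omega>B i j * x j) = 0" if "i \<in> VB" for i
            by (rule psd_zero_kernel[OF finB psdB stress_sym[OF stB] qb that])
          define xA where "xA = (\<lambda>i. if i \<in> VA then x i else 0)"
          define xB where "xB = (\<lambda>i. if i \<in> VB then x i else 0)"
          have "xA \<in> kernel_on VA \<Omega>A"
            unfolding kernel_on_def
          proof (intro CollectI conjI allI impI ballI)
            fix i assume "i \<notin> VA" then show "xA i = 0" unfolding xA_def by simp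
          next
            fix i assume i: "i \<in> VA"
            have "(\<Sum>j\<in>VA. \<Omega>A i j * xA j) = (\<Sum>j\<in>VA. \<Omega>A i j * x j)"
              unfolding xA_def by (intro sum.cong refl) simp
            then show "(\<Sum>j\<in>VA. \<Omega>A i j * xA j) = 0" using kA[OF i] by simp
          qed
          then obtain a b where xa: "xA = aff VA pA a b" using kerA by auto
          have "xB \<in> kernel_on VB \<Omega>B"
            unfolding kernel_on_def
          proof (intro CollectI conjI allI impI ballI)
            fix i assume "i \<notin> VB" then show "xB i = 0" unfolding xB_def by simp
          next
            fix i assume i: "i \<in> VB"
            have "(\<Sum>j\<in>VB. \<Omega>B i j * xB j) = (\<Sum>j\<in>VB. \<Omega>B i j * x j)"
              unfolding xB_def by (intro sum.cong refl) simp
            then show "(\<Sum>j\<in>VB. \<Omega>B i j * xB j) = 0" using kB[OF i] by simp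
          qed
          then obtain a' b' where xb: "xB = aff VB pB a' b'" using kerB by auto
          have xA_i: "x i = a \<bullet> pA i + b" if "i \<in> VA" for i
          proof -
            have "xA i = aff VA pA a b i" using xa by simp
            then show ?thesis using that unfolding xA_def aff_def by simp
          qed
          have xB_i: "x i = a' \<bullet> pB i + b'" if "i \<in> VB" for i
          proof -
            have "xB i = aff VB pB a' b' i" using xb by simp
            then show ?thesis using that unfolding xB_def aff_def by simp
          qed
          have "\<forall>i\<in>S0. (a - a') \<bullet> pA i + (b - b') = 0"
          proof
            fix i assume i: "i \<in> S0"
            have "x i = a \<bullet> pA i + b" using xA_i i S0A by blast
            moreover have "x i = a' \<bullet> pA i + b'" using xB_i i S0B pAB[OF i] by auto
            ultimately show "(a - a') \<bullet> pA i + (b - b') = 0" by (simp add: inner_diff_left)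
          qed
          then have "a - a' = 0 \<and> b - b' = 0" by (rule affine_indep_zero[OF S0(4,3,5)])
          then have aa: "a' = a" "b' = b" by auto
          have "x = aff (VA \<union> VB) p a b"
          proof
            fix i
            show "x i = aff (VA \<union> VB) p a b i"
            proof (cases "i \<in> VA")
              case True then show ?thesis using xA_i[OF True] pA_p[OF True] unfolding aff_def by simp
            next
              case nA: False
              show ?thesis
              proof (cases "i \<in> VB")
                case True then show ?thesis using xB_i[OF True] pB_p[OF True] aa unfolding aff_def by simp
              next
                case False
                then have "x i = 0" using x nA unfolding kernel_on_def by simp
                then show ?thesis using False nA unfolding aff_def by simp
              qed
            qed
          qed
          then show "x \<in> range (\<lambda>(a,b). aff (VA \<union> VB) p a b)"
            by (intro image_eqI[where x="(a,b)"]) simp_all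
        qed
      qed
      have nul_re: "nullity_on (VA \<union> VB) \<Omega>re = ?d + 1"
        unfolding nullity_on_def ker_re
        by (rule dim_aff[of S0 "VA \<union> VB" p]) (use S0A injp S0(3) S0(5) imp in auto)
      show "let \<Omega>re = (\<lambda>i j. cc * ext0 VA \<Omega>A i j + ext0 VA \<Omega>AK i j + ext0 VB \<Omega>B i j)
         in stress_matrix (VA \<union> VB) ((EA \<union> EB) - F) p \<Omega>re \<and> psd_on (VA \<union> VB) \<Omega>re \<and>
            nullity_on (VA \<union> VB) \<Omega>re = DIM('a) + 1"
        unfolding Let_def \<Omega>re_def[symmetric] using st_re psd_re nul_re by (intro conjI)
    qed
  qed
qed


end
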